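(* Let $S$ be a Polish space with Borel $\sigma$-algebra $\mathscr{B}_S$, and let $\mu_0$ be a diffuse probability measure on $(S,\mathscr{B}_S)$. Let $\boldsymbol{\mu}=\sum_{j\ge1}\mathbf{w}_j\delta_{\boldsymbol{\xi}_j}+\big(1-\sum_{j\ge1}\mathbf{w}_j\big)\mu_0$ be an exchangeable stick-breaking process (ESB) with base measure $\mu_0$, whose exchangeable $[0,1]$-valued length variables $(\mathbf{v}_i)_{i\ge1}$ are directed by the random probability measure $\boldsymbol{\nu}$ on $[0,1]$. Put $\nu_0=\mathbb{E}[\boldsymbol{\nu}]$. (i) If there exists $\varepsilon>0$ such that $(0,\varepsilon)$ is contained in the support of $\nu_0$, then $\boldsymbol{\mu}$ has full support. (ii) $\boldsymbol{\mu}$ is proper if and only if $\boldsymbol{\nu}(\{0\})<1$ almost surely.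
   Context: A species sampling process on a Polish space $S$ with (diffuse) base measure $\mu_0$ is a random probability measure $\boldsymbol{\mu}=\sum_{j\ge1}\mathbf{w}_j\delta_{\boldsymbol{\xi}_j}+(1-\sum_{j\ge1}\mathbf{w}_j)\mu_0$, where $(\mathbf{w}_j)_{j\ge1}$ are non-negative random variables with $\sum_j\mathbf{w}_j\le1$ a.s., independent of the atoms $(\boldsymbol{\xi}_j)_{j\ge1}$, which are i.i.d. with law $\mu_0$. It is proper if $\sum_j\mathbf{w}_j=1$ a.s. An ESB is a species sampling process whose weights are given by stick-breaking, $\mathbf{w}_1=\mathbf{v}_1$, $\mathbf{w}_j=\mathbf{v}_j\prod_{i=1}^{j-1}(1-\mathbf{v}_i)$ for $j\ge2$, where $(\mathbf{v}_i)_{i\ge1}$ is an exchangeable sequence of $[0,1]$-valued random variables (independent of the atoms); by de Finetti's theorem the $\mathbf{v}_i$ are conditionally i.i.d. given a random probability measure $\boldsymbol{\nu}$ on $[0,1]$ (the directing measure). "Full support" means: the topological support, with respect to the weak topology on the space of probability measures, of the law of $\boldsymbol{\mu}$ is the set of all probability measures whose support is contained in the support of $\mu_0$ (in particular, all probability measures on $S$ when $\mu_0$ has support $S$). *)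

theory Defs
  imports "HOL-Probability.Probability"
begin

text \<open>Stick-breaking weights (indices start at 0):
  w 0 = v 0, w j = v j * prod_{i<j} (1 - v i).\<close>
definition sb_weight :: "(nat \<Rightarrow> 'b \<Rightarrow> real) \<Rightarrow> nat \<Rightarrow> 'b \<Rightarrow> real" where
  "sb_weight v j \<omega> = v j \<omega> * (\<Prod>i<j. 1 - v i \<omega>)"

definition ssp_measure ::
  "(nat \<Rightarrow> 'b \<Rightarrow> real) \<Rightarrow> (nat \<Rightarrow> 'b \<Rightarrow> 'a::topological_space) \<Rightarrow> 'a measure \<Rightarrow> 'b \<Rightarrow> 'a measure" where
  "ssp_measure w \<xi> \<mu>0 \<omega> =
     measure_of UNIV (sets borel)
       (\<lambda>A. (\<Sum>j. ennreal (w j \<omega>) * indicator A (\<xi> j \<omega>))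
            + ennreal (1 - (\<Sum>j. w j \<omega>)) * emeasure \<mu>0 A)"

definition msupport :: "'a::topological_space measure \<Rightarrow> 'a set" where
  "msupport P = {x. \<forall>U. open U \<longrightarrow> x \<in> U \<longrightarrow> emeasure P U > 0}"

definition borel_probs :: "'a::topological_space measure set" where
  "borel_probs = {P. prob_space P \<and> sets P = sets borel}"

definition weak_nbhd :: "'a::topological_space measure \<Rightarrow> ('a \<Rightarrow> real) list \<Rightarrow> real \<Rightarrow> 'a measure set" where
  "weak_nbhd P fs \<epsilon> =
     {Q \<in> borel_probs. \<forall>f\<in>set fs. \<bar>(\<integral>x. f x \<partial>Q) - (\<integral>x. f x \<partial>P)\<bar> < \<epsilon>}"

definition bounded_continuous :: "('a::topological_space \<Rightarrow> real) \<Rightarrow> bool" where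
  "bounded_continuous f \<longleftrightarrow> continuous_on UNIV f \<and> bounded (range f)"

definition law_support :: "'b measure \<Rightarrow> ('b \<Rightarrow> 'a::topological_space measure) \<Rightarrow> 'a measure set" where
  "law_support M \<mu> =
     {P \<in> borel_probs. \<forall>fs \<epsilon>. (\<forall>f\<in>set fs. bounded_continuous f) \<longrightarrow> \<epsilon> > 0 \<longrightarrow>
        measure M {\<omega> \<in> space M. \<mu> \<omega> \<in> weak_nbhd P fs \<epsilon>} > 0}"

definition full_support :: "'b measure \<Rightarrow> ('b \<Rightarrow> 'a::topological_space measure) \<Rightarrow> 'a measure \<Rightarrow> bool" where
  "full_support M \<mu> \<mu>0 \<longleftrightarrow> law_support M \<mu> = {P \<in> borel_probs. msupport P \<subseteq> msupport \<mu>0}"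

definition exchangeable :: "'b measure \<Rightarrow> (nat \<Rightarrow> 'b \<Rightarrow> real) \<Rightarrow> bool" where
  "exchangeable M v \<longleftrightarrow> (\<forall>n \<pi>. \<pi> permutes {..<n} \<longrightarrow>
     distr M (PiM UNIV (\<lambda>_. borel)) (\<lambda>\<omega> i. v (\<pi> i) \<omega>) =
     distr M (PiM UNIV (\<lambda>_. borel)) (\<lambda>\<omega> i. v i \<omega>))"

definition random_prob_01 :: "'b measure \<Rightarrow> ('b \<Rightarrow> real measure) \<Rightarrow> bool" where
  "random_prob_01 M \<nu> \<longleftrightarrow>
     (\<forall>\<omega>\<in>space M. prob_space (\<nu> \<omega>) \<and> sets (\<nu> \<omega>) = sets borel \<and> emeasure (\<nu> \<omega>) {0..1} = 1) \<and>
     (\<forall>B\<in>sets borel. (\<lambda>\<omega>. measure (\<nu> \<omega>) B) \<in> borel_measurable M)"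

definition sigma_of_rm :: "'b measure \<Rightarrow> ('b \<Rightarrow> real measure) \<Rightarrow> 'b set set" where
  "sigma_of_rm M \<nu> = sigma_sets (space M)
     {(\<lambda>\<omega>. measure (\<nu> \<omega>) C) -` D \<inter> space M | C D. C \<in> sets borel \<and> D \<in> sets borel}"

text \<open>nu directs v: conditionally on nu, the v i are i.i.d. with law nu, i.e.
  P(v 0 : B 0, ..., v (n-1) : B (n-1) | nu) = prod_i nu(B i) a.s.\<close>
definition directs :: "'b measure \<Rightarrow> ('b \<Rightarrow> real measure) \<Rightarrow> (nat \<Rightarrow> 'b \<Rightarrow> real) \<Rightarrow> bool" where
  "directs M \<nu> v \<longleftrightarrow> (\<forall>n (B :: nat \<Rightarrow> real set) A.
     (\<forall>i. B i \<in> sets borel) \<longrightarrow> A \<in> sigma_of_rm M \<nu> \<longrightarrow>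
     measure M (A \<inter> {\<omega> \<in> space M. \<forall>i<n. v i \<omega> \<in> B i}) =
       (\<integral>\<omega>. indicator A \<omega> * (\<Prod>i<n. measure (\<nu> \<omega>) (B i)) \<partial>M))"

definition mean_measure :: "'b measure \<Rightarrow> ('b \<Rightarrow> real measure) \<Rightarrow> real measure" where
  "mean_measure M \<nu> = measure_of UNIV (sets borel) (\<lambda>B. \<integral>\<^sup>+\<omega>. emeasure (\<nu> \<omega>) B \<partial>M)"

end

theory Submission
  imports Defs
begin

lemma ssp_ms:
  fixes W :: "nat \<Rightarrow> 'b \<Rightarrow> real" and X :: "nat \<Rightarrow> 'b \<Rightarrow> 'a::topological_space"
  assumes W0: "\<And>j. W j \<omega> \<ge> 0" and mu0_sets: "sets \<mu>0 = sets borel"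
  shows "measure_space UNIV (sets borel)
    (\<lambda>A. (\<Sum>j. ennreal (W j \<omega>) * indicator A (X j \<omega>))
            + ennreal (1 - (\<Sum>j. W j \<omega>)) * emeasure \<mu>0 A)"
proof -
  have sa: "sigma_algebra UNIV (sets (borel::'a measure))"
    using sets.sigma_algebra_axioms[of "borel::'a measure"] by simp
  show ?thesis
    unfolding measure_space_def
  proof (intro conjI sa)
    show "positive (sets borel) (\<lambda>A. (\<Sum>j. ennreal (W j \<omega>) * indicator A (X j \<omega>))
            + ennreal (1 - (\<Sum>j. W j \<omega>)) * emeasure \<mu>0 A)"
      by (simp add: positive_def)
    show "countably_additive (sets borel) (\<lambda>A. (\<Sum>j. ennreal (W j \<omega>) * indicator A (X j \<omega>))
            + ennreal (1 - (\<Sum>j. W j \<omega>)) * emeasure \<mu>0 A)"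
      unfolding countably_additive_def
    proof (intro allI impI)
      fix A :: "nat \<Rightarrow> 'a set"
      assume A: "range A \<subseteq> sets borel" and d: "disjoint_family A"
      have swap: "(\<Sum>i. \<Sum>j. ennreal (W j \<omega>) * indicator (A i) (X j \<omega>))
          = (\<Sum>j. \<Sum>i. ennreal (W j \<omega>) * indicator (A i) (X j \<omega>))"
      proof -
        have "(\<Sum>j. \<Sum>i. ennreal (W j \<omega>) * indicator (A i) (X j \<omega>))
           = (\<integral>\<^sup>+j. (\<Sum>i. ennreal (W j \<omega>) * indicator (A i) (X j \<omega>)) \<partial>count_space UNIV)"
          by (simp add: nn_integral_count_space_nat)
        also have "\<dots> = (\<Sum>i. \<integral>\<^sup>+j. ennreal (W j \<omega>) * indicator (A i) (X j \<omega>) \<partial>count_space UNIV)"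
          by (rule nn_integral_suminf) simp
        also have "\<dots> = (\<Sum>i. \<Sum>j. ennreal (W j \<omega>) * indicator (A i) (X j \<omega>))"
          by (simp add: nn_integral_count_space_nat)
        finally show ?thesis by simp
      qed
      have ind: "\<And>j. (\<Sum>i. ennreal (W j \<omega>) * indicator (A i) (X j \<omega>))
           = ennreal (W j \<omega>) * indicator (\<Union>i. A i) (X j \<omega>)"
        using suminf_indicator[OF d] by simp
      have mu: "(\<Sum>i. emeasure \<mu>0 (A i)) = emeasure \<mu>0 (\<Union>i. A i)"
        using A d mu0_sets by (intro suminf_emeasure) auto
      show "(\<Sum>i. (\<Sum>j. ennreal (W j \<omega>) * indicator (A i) (X j \<omega>))
            + ennreal (1 - (\<Sum>j. W j \<omega>)) * emeasure \<mu>0 (A i)) =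
         (\<Sum>j. ennreal (W j \<omega>) * indicator (\<Union>i. A i) (X j \<omega>))
            + ennreal (1 - (\<Sum>j. W j \<omega>)) * emeasure \<mu>0 (\<Union>i. A i)"
        by (simp add: suminf_add[symmetric] swap suminf_indicator[OF d] mu[symmetric])
    qed
  qed
qed

locale sspw =
  fixes W :: "nat \<Rightarrow> 'b \<Rightarrow> real" and X :: "nat \<Rightarrow> 'b \<Rightarrow> 'a::topological_space"
    and \<mu>0 :: "'a measure" and \<omega> :: 'b
  assumes W0: "\<And>j. W j \<omega> \<ge> 0" and Wsum: "summable (\<lambda>j. W j \<omega>)"
    and Wle: "(\<Sum>j. W j \<omega>) \<le> 1"
    and mu0_prob: "prob_space \<mu>0" and mu0_sets: "sets \<mu>0 = sets borel"
begin

abbreviation "m \<equiv> ssp_measure W X \<mu>0 \<omega>"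
abbreviation "c \<equiv> 1 - (\<Sum>j. W j \<omega>)"

lemma sets_m[simp, measurable_cong]: "sets m = sets borel"
  unfolding ssp_measure_def by (simp add: sets.sigma_sets_eq[of borel, simplified])

lemma space_m[simp]: "space m = UNIV"
  unfolding ssp_measure_def by simp

lemma emeasure_m:
  assumes "A \<in> sets borel"
  shows "emeasure m A = (\<Sum>j. ennreal (W j \<omega>) * indicator A (X j \<omega>)) + ennreal c * emeasure \<mu>0 A"
proof -
  have "sigma_sets UNIV (sets (borel::'a measure)) = sets borel"
    using sets.sigma_sets_eq[of "borel::'a measure"] by simp
  then show ?thesis
    unfolding ssp_measure_def emeasure_measure_of_conv
    using ssp_ms[of W \<omega> \<mu>0 X, OF W0 mu0_sets] assms by simp
qed

lemma c_nonneg: "c \<ge> 0" using Wle by simp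

lemma prob_m: "prob_space m"
proof
  have "emeasure m UNIV = (\<Sum>j. ennreal (W j \<omega>)) + ennreal c * 1"
    using emeasure_m[of UNIV] prob_space.emeasure_space_1[OF mu0_prob] mu0_sets
    by (simp add: sets_eq_imp_space_eq[OF mu0_sets])
  also have "\<dots> = ennreal (\<Sum>j. W j \<omega>) + ennreal c"
    using suminf_ennreal2[OF W0 Wsum] by simp
  also have "\<dots> = 1" using c_nonneg W0 Wsum
    by (subst ennreal_plus[symmetric]) (auto intro: suminf_nonneg)
  finally show "emeasure m (space m) = 1" by simp
qed

lemma nn_integral_m:
  fixes g :: "'a \<Rightarrow> ennreal"
  assumes g: "g \<in> borel_measurable borel"
  shows "(\<integral>\<^sup>+x. g x \<partial>m) = (\<Sum>j. ennreal (W j \<omega>) * g (X j \<omega>)) + ennreal c * (\<integral>\<^sup>+x. g x \<partial>\<mu>0)"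
  using g
proof (induction rule: borel_measurable_induct)
  case (cong f g)
  then have "f = g" by auto
  then show ?case using cong by simp
next
  case (set A)
  then show ?case
    using emeasure_m[OF set] mu0_sets by (simp add: nn_integral_indicator)
next
  case (mult u a)
  have m1: "u \<in> borel_measurable m" using mult by simp
  have m2: "u \<in> borel_measurable \<mu>0" using mult(2) by (simp add: measurable_cong_sets[OF mu0_sets refl])
  have e1: "(\<Sum>j. ennreal (W j \<omega>) * (a * u (X j \<omega>))) = a * (\<Sum>j. ennreal (W j \<omega>) * u (X j \<omega>))"
    by (subst ennreal_suminf_cmult[symmetric]) (simp add: ac_simps)
  show ?case
    unfolding nn_integral_cmult[OF m1, of a] nn_integral_cmult[OF m2, of a] mult(4) e1
    by (simp add: distrib_left ac_simps)
next
  case (add u v)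
  have b: "u \<in> borel_measurable borel" "v \<in> borel_measurable borel" using add by blast+
  have m1: "u \<in> borel_measurable m" "v \<in> borel_measurable m" using b by simp_all
  have m2: "u \<in> borel_measurable \<mu>0" "v \<in> borel_measurable \<mu>0"
    using b by (simp_all add: measurable_cong_sets[OF mu0_sets refl])
  have s: "(\<Sum>j. ennreal (W j \<omega>) * (v (X j \<omega>) + u (X j \<omega>))) =
     (\<Sum>j. ennreal (W j \<omega>) * v (X j \<omega>)) + (\<Sum>j. ennreal (W j \<omega>) * u (X j \<omega>))"
    by (simp add: distrib_left suminf_add[symmetric])
  show ?case
    unfolding nn_integral_add[OF m1(2) m1(1)] nn_integral_add[OF m2(2) m2(1)] s add.IH
    by (simp add: algebra_simps)
next
  case (seq U)
  have inc: "incseq U" using seq by blast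
  have m1: "\<And>i. U i \<in> borel_measurable m" using seq by simp
  have m2: "\<And>i. U i \<in> borel_measurable \<mu>0" using seq(1) by (simp add: measurable_cong_sets[OF mu0_sets refl])
  have L: "(\<integral>\<^sup>+x. (SUP i. U i) x \<partial>m) = (SUP i. \<integral>\<^sup>+x. U i x \<partial>m)"
    using nn_integral_monotone_convergence_SUP[OF inc m1] by (simp add: image_image)
  have L2: "(\<integral>\<^sup>+x. (SUP i. U i) x \<partial>\<mu>0) = (SUP i. \<integral>\<^sup>+x. U i x \<partial>\<mu>0)"
    using nn_integral_monotone_convergence_SUP[OF inc m2] by (simp add: image_image)
  have inc1: "incseq (\<lambda>i. \<Sum>j. ennreal (W j \<omega>) * U i (X j \<omega>))"
    using inc unfolding incseq_def le_fun_def
    by (intro allI impI suminf_le) (auto intro: mult_left_mono)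
  have inc2: "incseq (\<lambda>i. ennreal c * (\<integral>\<^sup>+x. U i x \<partial>\<mu>0))"
    using inc unfolding incseq_def le_fun_def
    by (intro allI impI mult_left_mono nn_integral_mono) auto
  have S: "(\<Sum>j. ennreal (W j \<omega>) * (SUP i. U i) (X j \<omega>)) = (SUP i. \<Sum>j. ennreal (W j \<omega>) * U i (X j \<omega>))"
  proof -
    have "(\<Sum>j. ennreal (W j \<omega>) * (SUP i. U i) (X j \<omega>)) = (\<Sum>j. SUP i. ennreal (W j \<omega>) * U i (X j \<omega>))"
      by (simp add: image_image SUP_mult_left_ennreal)
    also have "\<dots> = (SUP i. \<Sum>j. ennreal (W j \<omega>) * U i (X j \<omega>))"
      using inc unfolding incseq_def le_fun_def
      by (intro ennreal_suminf_SUP_eq) (auto simp: incseq_def intro: mult_left_mono)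
    finally show ?thesis .
  qed
  show ?case
    unfolding L L2 S seq.IH SUP_mult_left_ennreal
    using ennreal_SUP_add[OF inc1 inc2] by simp
qed

lemma summable_Wf:
  fixes f :: "'a \<Rightarrow> real"
  assumes B: "\<And>x. \<bar>f x\<bar> \<le> B"
  shows "summable (\<lambda>j. W j \<omega> * f (X j \<omega>))"
proof (rule summable_comparison_test[of _ "\<lambda>j. W j \<omega> * B"])
  show "\<exists>N. \<forall>n\<ge>N. norm (W n \<omega> * f (X n \<omega>)) \<le> W n \<omega> * B"
    using B W0 by (auto simp: abs_mult intro!: mult_left_mono)
  show "summable (\<lambda>j. W j \<omega> * B)" using Wsum by (rule summable_mult2)
qed

lemma integral_m:
  fixes f :: "'a \<Rightarrow> real"
  assumes fm: "f \<in> borel_measurable borel" and B: "\<And>x. \<bar>f x\<bar> \<le> B"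
  shows "(\<integral>x. f x \<partial>m) = (\<Sum>j. W j \<omega> * f (X j \<omega>)) + c * (\<integral>x. f x \<partial>\<mu>0)"
proof -
  interpret pm: prob_space m by (rule prob_m)
  interpret p0: prob_space \<mu>0 by (rule mu0_prob)
  define g where "g x = f x + B" for x
  have g0: "g x \<ge> 0" for x unfolding g_def using B[of x] by linarith
  have gB: "\<bar>g x\<bar> \<le> 2 * B" for x unfolding g_def using B[of x] by linarith
  have gm: "g \<in> borel_measurable borel" unfolding g_def using fm by measurable
  have gm1: "g \<in> borel_measurable m" using gm by simp
  have gm0: "g \<in> borel_measurable \<mu>0" using gm by (simp add: measurable_cong_sets[OF mu0_sets refl])
  have fm1: "f \<in> borel_measurable m" using fm by simp
  have fm0: "f \<in> borel_measurable \<mu>0" using fm by (simp add: measurable_cong_sets[OF mu0_sets refl])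
  have ig1: "integrable m g" by (rule pm.integrable_const_bound[of _ "2*B"]) (use gB gm1 in auto)
  have ig0: "integrable \<mu>0 g" by (rule p0.integrable_const_bound[of _ "2*B"]) (use gB gm0 in auto)
  have if1: "integrable m f" by (rule pm.integrable_const_bound[of _ "B"]) (use B fm1 in auto)
  have if0: "integrable \<mu>0 f" by (rule p0.integrable_const_bound[of _ "B"]) (use B fm0 in auto)
  have sg: "summable (\<lambda>j. W j \<omega> * g (X j \<omega>))" by (rule summable_Wf[OF gB])
  have sf: "summable (\<lambda>j. W j \<omega> * f (X j \<omega>))" by (rule summable_Wf[OF B])
  have "(\<integral>\<^sup>+x. ennreal (g x) \<partial>m) = (\<Sum>j. ennreal (W j \<omega>) * ennreal (g (X j \<omega>))) + ennreal c * (\<integral>\<^sup>+x. ennreal (g x) \<partial>\<mu>0)"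
    by (rule nn_integral_m) (use gm in simp)
  also have "(\<Sum>j. ennreal (W j \<omega>) * ennreal (g (X j \<omega>))) = ennreal (\<Sum>j. W j \<omega> * g (X j \<omega>))"
    using suminf_ennreal2[of "\<lambda>j. W j \<omega> * g (X j \<omega>)", OF _ sg] W0 g0
    by (simp add: ennreal_mult)
  also have "(\<integral>\<^sup>+x. ennreal (g x) \<partial>\<mu>0) = ennreal (\<integral>x. g x \<partial>\<mu>0)"
    by (rule nn_integral_eq_integral[OF ig0]) (use g0 in auto)
  finally have "(\<integral>\<^sup>+x. ennreal (g x) \<partial>m) = ennreal ((\<Sum>j. W j \<omega> * g (X j \<omega>)) + c * (\<integral>x. g x \<partial>\<mu>0))"
    using c_nonneg g0 W0 sg
    by (simp add: ennreal_mult ennreal_plus suminf_nonneg integral_nonneg)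
  moreover have "(\<integral>\<^sup>+x. ennreal (g x) \<partial>m) = ennreal (\<integral>x. g x \<partial>m)"
    by (rule nn_integral_eq_integral[OF ig1]) (use g0 in auto)
  ultimately have ee: "ennreal (\<integral>x. g x \<partial>m) = ennreal ((\<Sum>j. W j \<omega> * g (X j \<omega>)) + c * (\<integral>x. g x \<partial>\<mu>0))"
    by simp
  have n1: "0 \<le> (\<integral>x. g x \<partial>m)" using g0 by (simp add: integral_nonneg)
  have n2: "0 \<le> (\<integral>x. g x \<partial>\<mu>0)" using g0 by (simp add: integral_nonneg)
  have n3: "0 \<le> (\<Sum>j. W j \<omega> * g (X j \<omega>))" by (rule suminf_nonneg[OF sg]) (use g0 W0 in auto)
  have eq: "(\<integral>x. g x \<partial>m) = (\<Sum>j. W j \<omega> * g (X j \<omega>)) + c * (\<integral>x. g x \<partial>\<mu>0)"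
    using ee n1 n2 n3 c_nonneg by (subst (asm) ennreal_inj) auto
  have e1: "(\<integral>x. g x \<partial>m) = (\<integral>x. f x \<partial>m) + B"
    unfolding g_def using if1 pm.prob_space by simp
  have e0: "(\<integral>x. g x \<partial>\<mu>0) = (\<integral>x. f x \<partial>\<mu>0) + B"
    unfolding g_def using if0 p0.prob_space by simp
  have es: "(\<Sum>j. W j \<omega> * g (X j \<omega>)) = (\<Sum>j. W j \<omega> * f (X j \<omega>)) + B * (\<Sum>j. W j \<omega>)"
    unfolding g_def distrib_left
    using suminf_add[OF sf summable_mult2[OF Wsum, of B]] suminf_mult2[OF Wsum, of B]
    by (simp add: ac_simps)
  show ?thesis using eq e1 e0 es by (simp add: algebra_simps)
qed

end


definition sbw :: "(nat \<Rightarrow> real) \<Rightarrow> nat \<Rightarrow> real" where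
  "sbw u j = u j * (\<Prod>i<j. 1 - u i)"

lemma sb_weight_sbw: "sb_weight v j \<omega> = sbw (\<lambda>i. v i \<omega>) j"
  by (simp add: sb_weight_def sbw_def)

lemma sbw_partial: "(\<Sum>j<n. sbw u j) = 1 - (\<Prod>i<n. 1 - u i)"
  by (induction n) (auto simp: sbw_def algebra_simps)

locale sb01 =
  fixes u :: "nat \<Rightarrow> real"
  assumes u01: "\<And>i. 0 \<le> u i \<and> u i \<le> 1"
begin

lemma prod_01: "0 \<le> (\<Prod>i<n. 1 - u i) \<and> (\<Prod>i<n. 1 - u i) \<le> 1"
  using u01 by (auto intro!: prod_nonneg prod_le_1)

lemma sbw_nonneg: "0 \<le> sbw u j"
  unfolding sbw_def using u01 prod_01 by auto

lemma sbw_summable: "summable (sbw u)"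
  by (rule summableI_nonneg_bounded[of _ 1]) (use sbw_nonneg sbw_partial prod_01 in auto)

lemma sbw_le1: "(\<Sum>j. sbw u j) \<le> 1"
  by (rule suminf_le_const[OF sbw_summable]) (use sbw_partial prod_01 in auto)

lemma prod_tendsto: "(\<lambda>n. \<Prod>i<n. 1 - u i) \<longlonglongrightarrow> 1 - (\<Sum>j. sbw u j)"
proof -
  have "(\<lambda>n. \<Sum>j<n. sbw u j) \<longlonglongrightarrow> (\<Sum>j. sbw u j)"
    using sbw_summable summable_LIMSEQ by blast
  then have "(\<lambda>n. 1 - (\<Sum>j<n. sbw u j)) \<longlonglongrightarrow> 1 - (\<Sum>j. sbw u j)"
    by (intro tendsto_intros)
  then show ?thesis by (simp add: sbw_partial)
qed

lemma rest_le_prod: "1 - (\<Sum>j. sbw u j) \<le> (\<Prod>i<N. 1 - u i)"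
proof -
  have "(\<Sum>j<N. sbw u j) \<le> (\<Sum>j. sbw u j)"
    by (rule sum_le_suminf[OF sbw_summable]) (use sbw_nonneg in auto)
  then show ?thesis by (simp add: sbw_partial)
qed

lemma prod_decseq: "m \<le> n \<Longrightarrow> (\<Prod>i<n. 1 - u i) \<le> (\<Prod>i<m. 1 - u i)"
proof -
  have "decseq (\<lambda>n. \<Prod>i<n. 1 - u i)"
  proof (rule decseq_SucI)
    fix n
    have "(\<Prod>i<n. 1 - u i) * (1 - u n) \<le> (\<Prod>i<n. 1 - u i) * 1"
      using prod_01[of n] u01[of n] by (intro mult_left_mono) auto
    then show "(\<Prod>i<Suc n. 1 - u i) \<le> (\<Prod>i<n. 1 - u i)" by simp
  qed
  then show "m \<le> n \<Longrightarrow> ?thesis" by (simp add: decseq_def)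
qed

lemma sbw_sum1:
  assumes d: "0 < d" and inf: "\<forall>m. \<exists>i\<ge>m. d < u i"
  shows "(\<Sum>j. sbw u j) = 1"
proof -
  have d1: "d < 1" using inf u01 by (meson order_less_le_trans)
  have K: "\<exists>n. (\<Prod>i<n. 1 - u i) \<le> (1 - d) ^ K" for K
  proof (induction K)
    case 0 then show ?case by (auto intro!: exI[of _ 0])
  next
    case (Suc K)
    then obtain n where n: "(\<Prod>i<n. 1 - u i) \<le> (1 - d) ^ K" by blast
    obtain i where i: "i \<ge> n" "d < u i" using inf by blast
    have "(\<Prod>i<Suc i. 1 - u i) = (\<Prod>i<i. 1 - u i) * (1 - u i)" by simp
    also have "\<dots> \<le> (1 - d) ^ K * (1 - d)"
      using prod_decseq[OF i(1)] n u01[of i] i(2) prod_01[of i] d1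
      by (intro mult_mono) auto
    finally have "(\<Prod>i<Suc i. 1 - u i) \<le> (1 - d) ^ Suc K" by (simp add: mult.commute)
    then show ?case by blast
  qed
  have L: "1 - (\<Sum>j. sbw u j) \<le> (1 - d) ^ K" for K
    using K[of K] rest_le_prod by (meson order_trans)
  have "(\<lambda>K. (1 - d) ^ K) \<longlonglongrightarrow> 0"
    using d d1 by (intro LIMSEQ_power_zero) auto
  then have "1 - (\<Sum>j. sbw u j) \<le> 0"
    by (rule LIMSEQ_le_const) (use L in auto)
  then show ?thesis using sbw_le1 by simp
qed

lemma tail_eq: "(\<Sum>j. sbw u (j + N)) = (\<Prod>i<N. 1 - u i) - (1 - (\<Sum>j. sbw u j))"
  using suminf_split_initial_segment[OF sbw_summable, of N] sbw_partial[of u N]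
  by simp

end

lemma prod_diff_le:
  fixes x y :: "nat \<Rightarrow> real"
  assumes "\<And>i. i < n \<Longrightarrow> 0 \<le> x i \<and> x i \<le> 1" "\<And>i. i < n \<Longrightarrow> 0 \<le> y i \<and> y i \<le> 1"
  shows "\<bar>(\<Prod>i<n. x i) - (\<Prod>i<n. y i)\<bar> \<le> (\<Sum>i<n. \<bar>x i - y i\<bar>)"
  using assms
proof (induction n)
  case 0 then show ?case by simp
next
  case (Suc n)
  let ?X = "\<Prod>i<n. x i" and ?Y = "\<Prod>i<n. y i"
  have X: "0 \<le> ?X" "?X \<le> 1" using Suc.prems by (auto intro!: prod_nonneg prod_le_1)
  have Y: "0 \<le> ?Y" "?Y \<le> 1" using Suc.prems by (auto intro!: prod_nonneg prod_le_1)
  have xn: "0 \<le> x n" "x n \<le> 1" "0 \<le> y n" "y n \<le> 1" using Suc.prems by auto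
  have IH: "\<bar>?X - ?Y\<bar> \<le> (\<Sum>i<n. \<bar>x i - y i\<bar>)" using Suc by auto
  have "\<bar>?X * x n - ?Y * y n\<bar> = \<bar>(?X - ?Y) * x n + ?Y * (x n - y n)\<bar>"
    by (simp add: algebra_simps)
  also have "\<dots> \<le> \<bar>?X - ?Y\<bar> * x n + ?Y * \<bar>x n - y n\<bar>"
    using xn X Y by (simp add: abs_mult abs_triangle_ineq[THEN order_trans])
  also have "\<dots> \<le> \<bar>?X - ?Y\<bar> + \<bar>x n - y n\<bar>"
    using xn Y by (intro add_mono mult_left_le mult_left_le_one_le) auto
  finally show ?case using IH by simp
qed


locale esb =
  fixes M :: "'b measure"
    and \<mu>0 :: "'a::polish_space measure"
    and v :: "nat \<Rightarrow> 'b \<Rightarrow> real"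
    and \<xi> :: "nat \<Rightarrow> 'b \<Rightarrow> 'a"
    and \<nu> :: "'b \<Rightarrow> real measure"
  assumes M: "prob_space M"
    and mu0_prob: "prob_space \<mu>0" and mu0_sets: "sets \<mu>0 = sets borel"
    and v_rv[measurable]: "\<And>i. v i \<in> borel_measurable M"
    and v_01: "\<And>i \<omega>. \<omega> \<in> space M \<Longrightarrow> v i \<omega> \<in> {0..1}"
    and nu_rpm: "random_prob_01 M \<nu>"
    and nu_directs: "directs M \<nu> v"
    and xi_indep: "prob_space.indep_vars M (\<lambda>_. borel) \<xi> UNIV"
    and xi_law: "\<And>i. distr M borel (\<xi> i) = \<mu>0"
    and xi_v_indep: "distr M (PiM UNIV (\<lambda>_. borel) \<Otimes>\<^sub>M PiM UNIV (\<lambda>_. borel))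
                       (\<lambda>\<omega>. (\<lambda>i. \<xi> i \<omega>, \<lambda>i. v i \<omega>))
                     = distr M (PiM UNIV (\<lambda>_. borel)) (\<lambda>\<omega> i. \<xi> i \<omega>)
                       \<Otimes>\<^sub>M distr M (PiM UNIV (\<lambda>_. borel)) (\<lambda>\<omega> i. v i \<omega>)"
begin

sublocale P: prob_space M by (rule M)

lemma nu_prob: "\<omega> \<in> space M \<Longrightarrow> prob_space (\<nu> \<omega>)"
  using nu_rpm unfolding random_prob_01_def by auto

lemma nu_sets: "\<omega> \<in> space M \<Longrightarrow> sets (\<nu> \<omega>) = sets borel"
  using nu_rpm unfolding random_prob_01_def by auto

lemma nu_space: "\<omega> \<in> space M \<Longrightarrow> space (\<nu> \<omega>) = UNIV"
  using sets_eq_imp_space_eq[OF nu_sets] by simp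

lemma nu_01: "\<omega> \<in> space M \<Longrightarrow> emeasure (\<nu> \<omega>) {0..1} = 1"
  using nu_rpm unfolding random_prob_01_def by auto

lemma nu_meas[measurable]: "C \<in> sets borel \<Longrightarrow> (\<lambda>\<omega>. measure (\<nu> \<omega>) C) \<in> borel_measurable M"
  using nu_rpm unfolding random_prob_01_def by auto

lemma in_sigma_rm:
  assumes "C \<in> sets borel" "D \<in> sets borel"
  shows "(\<lambda>\<omega>. measure (\<nu> \<omega>) C) -` D \<inter> space M \<in> sigma_of_rm M \<nu>"
  unfolding sigma_of_rm_def using assms by (intro sigma_sets.Basic) blast

lemma directsD:
  assumes "\<And>i. B i \<in> sets borel" "A \<in> sigma_of_rm M \<nu>"
  shows "measure M (A \<inter> {\<omega> \<in> space M. \<forall>i<n. v i \<omega> \<in> B i}) =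
       (\<integral>\<omega>. indicator A \<omega> * (\<Prod>i<n. measure (\<nu> \<omega>) (B i)) \<partial>M)"
  using nu_directs assms unfolding directs_def by blast

lemma sets_vB:
  assumes [measurable]: "\<And>i. B i \<in> sets borel"
  shows "{\<omega> \<in> space M. \<forall>i<N. v i \<omega> \<in> B i} \<in> sets M"
  by measurable

lemma sb01_v: "\<omega> \<in> space M \<Longrightarrow> sb01 (\<lambda>i. v i \<omega>)"
  using v_01 by unfold_locales auto


lemma sum_sbw: "\<omega> \<in> space M \<Longrightarrow> (\<Sum>j. sb_weight v j \<omega>) = (\<Sum>j. sbw (\<lambda>i. v i \<omega>) j)"
  by (simp add: sb_weight_sbw)

lemma part2_fwd:
  assumes H: "AE \<omega> in M. (\<Sum>j. sb_weight v j \<omega>) = 1"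
  shows "AE \<omega> in M. measure (\<nu> \<omega>) {0} < 1"
proof -
  define A where "A = (\<lambda>\<omega>. measure (\<nu> \<omega>) {0}) -` {1..} \<inter> space M"
  have Asig: "A \<in> sigma_of_rm M \<nu>" unfolding A_def by (rule in_sigma_rm) auto
  have AM: "A \<in> sets M" unfolding A_def by (rule measurable_sets[OF nu_meas]) auto
  have one: "measure (\<nu> \<omega>) {0} = 1" if "\<omega> \<in> A" for \<omega>
  proof -
    have "\<omega> \<in> space M" using that A_def by auto
    then have "measure (\<nu> \<omega>) {0} \<le> 1" using nu_prob prob_space.prob_le_1 by blast
    then show ?thesis using that A_def by auto
  qed
  have ae_i: "AE \<omega> in M. \<omega> \<in> A \<longrightarrow> v i \<omega> = 0" for i
  proof -
    define E where "E = {\<omega> \<in> space M. \<forall>j<Suc i. v j \<omega> \<in> {0}}"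
    have EM: "E \<in> sets M" unfolding E_def by (rule sets_vB) auto
    have "measure M (A \<inter> E) = (\<integral>\<omega>. indicator A \<omega> * (\<Prod>j<Suc i. measure (\<nu> \<omega>) {0}) \<partial>M)"
      unfolding E_def by (rule directsD) (use Asig in auto)
    also have "\<dots> = (\<integral>\<omega>. indicator A \<omega> \<partial>M)"
      by (rule Bochner_Integration.integral_cong) (auto simp: one indicator_def)
    also have "\<dots> = measure M A" using AM by simp
    finally have eq: "measure M (A \<inter> E) = measure M A" .
    have "measure M (A - (A \<inter> E)) = measure M A - measure M (A \<inter> E)"
      using AM EM by (intro P.finite_measure_Diff) auto
    then have "measure M (A - (A \<inter> E)) = 0" using eq by simp
    then have N: "A - (A \<inter> E) \<in> null_sets M"
      using AM EM by (simp add: null_sets_def P.emeasure_eq_measure)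
    show ?thesis
    proof (rule AE_I'[OF N])
      show "{\<omega> \<in> space M. \<not> (\<omega> \<in> A \<longrightarrow> v i \<omega> = 0)} \<subseteq> A - A \<inter> E"
        unfolding E_def by auto
    qed
  qed
  have "AE \<omega> in M. \<forall>i. \<omega> \<in> A \<longrightarrow> v i \<omega> = 0"
    by (rule AE_all_countable[THEN iffD2]) (use ae_i in blast)
  with H AE_space show ?thesis
  proof eventually_elim
    case (elim \<omega>)
    have "\<omega> \<notin> A"
    proof
      assume "\<omega> \<in> A"
      then have "\<And>i. v i \<omega> = 0" using elim by auto
      then have "(\<Sum>j. sb_weight v j \<omega>) = 0" by (simp add: sb_weight_def)
      then show False using elim by simp
    qed
    then show ?case using elim A_def by auto
  qed
qed


lemma nu_pos_part:
  assumes \<omega>: "\<omega> \<in> space M" and lt: "measure (\<nu> \<omega>) {0} < 1"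
  shows "\<exists>q k. inverse (real (Suc k)) \<le> measure (\<nu> \<omega>) {inverse (real (Suc q))<..}"
proof -
  interpret N: prob_space "\<nu> \<omega>" using nu_prob[OF \<omega>] .
  have sN: "sets (\<nu> \<omega>) = sets borel" using nu_sets[OF \<omega>] .
  have spN: "space (\<nu> \<omega>) = UNIV" using nu_space[OF \<omega>] .
  have m01: "measure (\<nu> \<omega>) {0..1} = 1" using nu_01[OF \<omega>] N.emeasure_eq_measure by simp
  have "measure (\<nu> \<omega>) (UNIV - {0..1}) = 1 - measure (\<nu> \<omega>) {0..1}"
    using N.prob_compl[of "{0..1}"] sN spN by simp
  then have c0: "measure (\<nu> \<omega>) (UNIV - {0..1}) = 0" using m01 by simp
  have sub: "{..<0::real} \<subseteq> UNIV - {0..1}" by auto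
  have "measure (\<nu> \<omega>) {..<0} \<le> measure (\<nu> \<omega>) (UNIV - {0..1})"
    by (rule N.finite_measure_mono[OF sub]) (simp add: sN)
  then have neg: "measure (\<nu> \<omega>) {..<0} = 0"
    using c0 measure_nonneg[of "\<nu> \<omega>" "{..<0}"] by linarith
  have un: "{..0::real} = {..<0} \<union> {0}" by auto
  have "measure (\<nu> \<omega>) {..0} \<le> measure (\<nu> \<omega>) {..<0} + measure (\<nu> \<omega>) {0}"
    unfolding un by (rule N.finite_measure_Union[THEN eq_refl]) (auto simp: sN)
  then have le0: "measure (\<nu> \<omega>) {..0} < 1" using neg lt by simp
  have "measure (\<nu> \<omega>) (UNIV - {..0}) = 1 - measure (\<nu> \<omega>) {..0}"
    using N.prob_compl[of "{..0}"] sN spN by simp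
  moreover have "UNIV - {..0::real} = {0<..}" by auto
  ultimately have pos: "0 < measure (\<nu> \<omega>) {0<..}" using le0 by simp
  define S where "S q = {inverse (real (Suc q))<..}" for q
  have inc: "incseq S"
  proof (rule incseq_SucI)
    fix n
    have "inverse (real (Suc (Suc n))) \<le> inverse (real (Suc n))"
      by (rule le_imp_inverse_le) auto
    then show "S n \<subseteq> S (Suc n)" unfolding S_def by auto
  qed
  have U: "(\<Union>q. S q) = {0<..}"
  proof
    show "(\<Union>q. S q) \<subseteq> {0<..}"
    proof
      fix x assume "x \<in> (\<Union>q. S q)"
      then obtain q where "inverse (real (Suc q)) < x" unfolding S_def by auto
      moreover have "0 < inverse (real (Suc q))" by simp
      ultimately have "0 < x" by linarith
      then show "x \<in> {0<..}" by simp
    qed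
    show "{0<..} \<subseteq> (\<Union>q. S q)"
    proof
      fix x :: real assume "x \<in> {0<..}"
      then have "0 < x" by simp
      then obtain q where "inverse (real (Suc q)) < x" using reals_Archimedean by blast
      then show "x \<in> (\<Union>q. S q)" unfolding S_def by auto
    qed
  qed
  have "(\<lambda>q. measure (\<nu> \<omega>) (S q)) \<longlonglongrightarrow> measure (\<nu> \<omega>) (\<Union>q. S q)"
  proof (rule N.finite_Lim_measure_incseq[OF _ inc])
    have "S q \<in> sets (\<nu> \<omega>)" for q unfolding S_def sN by simp
    then show "range S \<subseteq> N.events" by blast
  qed
  then have "(\<lambda>q. measure (\<nu> \<omega>) (S q)) \<longlonglongrightarrow> measure (\<nu> \<omega>) {0<..}" using U by simp
  from order_tendstoD(1)[OF this pos] obtain N where "\<forall>n\<ge>N. 0 < measure (\<nu> \<omega>) (S n)"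
    unfolding eventually_sequentially by blast
  then have q: "0 < measure (\<nu> \<omega>) (S N)" by blast
  obtain k where "inverse (real (Suc k)) < measure (\<nu> \<omega>) (S N)"
    using reals_Archimedean[OF q] by blast
  then have "inverse (real (Suc k)) \<le> measure (\<nu> \<omega>) {inverse (real (Suc N))<..}"
    unfolding S_def by (rule less_imp_le)
  then show ?thesis by blast
qed

lemma part2_bwd:
  assumes H: "AE \<omega> in M. measure (\<nu> \<omega>) {0} < 1"
  shows "AE \<omega> in M. (\<Sum>j. sb_weight v j \<omega>) = 1"
proof -
  define d where "d q = inverse (real (Suc q))" for q :: nat
  define A where "A q k = (\<lambda>\<omega>. measure (\<nu> \<omega>) {d q<..}) -` {inverse (real (Suc k))..} \<inter> space M" for q k
  define F where "F q m = {\<omega> \<in> space M. \<forall>i\<ge>m. v i \<omega> \<le> d q}" for q m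
  have AM: "A q k \<in> sets M" for q k unfolding A_def by (rule measurable_sets[OF nu_meas]) auto
  have Asig: "A q k \<in> sigma_of_rm M \<nu>" for q k unfolding A_def by (rule in_sigma_rm) auto
  have FM: "F q m \<in> sets M" for q m unfolding F_def by measurable
  have null: "A q k \<inter> F q m \<in> null_sets M" for q k m
  proof -
    define r where "r = 1 - inverse (real (Suc k))"
    have r0: "0 \<le> r" "r < 1" unfolding r_def by (auto simp: field_simps)
    define B where "B i = (if i < m then UNIV else {..d q})" for i
    have B: "B i \<in> sets borel" for i unfolding B_def by auto
    have bound: "measure M (A q k \<inter> F q m) \<le> r ^ n" for n
    proof -
      define G where "G = {\<omega> \<in> space M. \<forall>i<m+n. v i \<omega> \<in> B i}"
      have GM: "G \<in> sets M" unfolding G_def by (rule sets_vB[OF B])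
      have sub: "A q k \<inter> F q m \<subseteq> A q k \<inter> G" unfolding F_def G_def B_def by auto
      have "measure M (A q k \<inter> F q m) \<le> measure M (A q k \<inter> G)"
        using AM GM sub by (intro P.finite_measure_mono) auto
      also have "\<dots> = (\<integral>\<omega>. indicator (A q k) \<omega> * (\<Prod>i<m+n. measure (\<nu> \<omega>) (B i)) \<partial>M)"
        unfolding G_def by (rule directsD[OF B Asig])
      also have "\<dots> \<le> (\<integral>\<omega>. r ^ n \<partial>M)"
      proof (rule integral_mono)
        show "integrable M (\<lambda>\<omega>. r ^ n)" by simp
        have meas: "(\<lambda>\<omega>. indicator (A q k) \<omega> * (\<Prod>i<m+n. measure (\<nu> \<omega>) (B i))) \<in> borel_measurable M"
          using AM B by measurable
        show "integrable M (\<lambda>\<omega>. indicator (A q k) \<omega> * (\<Prod>i<m+n. measure (\<nu> \<omega>) (B i)))"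
        proof (rule P.integrable_const_bound[OF _ meas])
          show "AE \<omega> in M. norm (indicator (A q k) \<omega> * (\<Prod>i<m+n. measure (\<nu> \<omega>) (B i))) \<le> 1"
          proof (rule AE_I2)
            fix \<omega> assume \<omega>: "\<omega> \<in> space M"
            interpret N: prob_space "\<nu> \<omega>" using nu_prob[OF \<omega>] .
            have "\<bar>\<Prod>i<m+n. measure (\<nu> \<omega>) (B i)\<bar> \<le> 1"
              by (simp add: abs_prod prod_le_1 N.prob_le_1)
            then show "norm (indicator (A q k) \<omega> * (\<Prod>i<m+n. measure (\<nu> \<omega>) (B i))) \<le> 1"
              by (auto simp: indicator_def abs_mult)
          qed
        qed
        fix \<omega> assume \<omega>: "\<omega> \<in> space M"
        interpret N: prob_space "\<nu> \<omega>" using nu_prob[OF \<omega>] .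
        have sN: "sets (\<nu> \<omega>) = sets borel" using nu_sets[OF \<omega>] .
        have spN: "space (\<nu> \<omega>) = UNIV" using nu_space[OF \<omega>] .
        have pr: "(\<Prod>i<m+n. measure (\<nu> \<omega>) (B i)) = measure (\<nu> \<omega>) {..d q} ^ n"
        proof -
          have one: "measure (\<nu> \<omega>) UNIV = 1" using N.prob_space spN by simp
          have base: "(\<Prod>i<m. measure (\<nu> \<omega>) (B i)) = 1"
            by (rule prod.neutral) (simp add: B_def one)
          have "(\<Prod>i<m+n'. measure (\<nu> \<omega>) (B i)) = measure (\<nu> \<omega>) {..d q} ^ n'" for n'
          proof (induction n')
            case 0 then show ?case using base by simp
          next
            case (Suc n') then show ?case by (simp add: B_def)
          qed
          then show ?thesis .
        qed
        show "indicator (A q k) \<omega> * (\<Prod>i<m+n. measure (\<nu> \<omega>) (B i)) \<le> r ^ n"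
        proof (cases "\<omega> \<in> A q k")
          case True
          have "measure (\<nu> \<omega>) (UNIV - {d q<..}) = 1 - measure (\<nu> \<omega>) {d q<..}"
            using N.prob_compl[of "{d q<..}"] sN spN by simp
          moreover have "UNIV - {d q<..} = {..d q}" by auto
          ultimately have "measure (\<nu> \<omega>) {..d q} \<le> r"
            using True unfolding A_def r_def by auto
          then have "measure (\<nu> \<omega>) {..d q} ^ n \<le> r ^ n"
            by (intro power_mono) auto
          then show ?thesis using True pr by simp
        next
          case False then show ?thesis using r0 by simp
        qed
      qed
      also have "\<dots> = r ^ n" by (simp add: P.prob_space)
      finally show ?thesis .
    qed
    have "(\<lambda>n. r ^ n) \<longlonglongrightarrow> 0" using r0 by (intro LIMSEQ_power_zero) auto
    then have "measure M (A q k \<inter> F q m) \<le> 0"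
      by (rule LIMSEQ_le_const) (use bound in auto)
    then have "measure M (A q k \<inter> F q m) = 0" using measure_nonneg antisym by blast
    then show ?thesis using AM FM by (simp add: null_sets_def P.emeasure_eq_measure)
  qed
  have Nnull: "(\<Union>q. \<Union>k. \<Union>m. A q k \<inter> F q m) \<in> null_sets M"
    using null by (intro null_sets_UN) blast
  have "AE \<omega> in M. \<omega> \<notin> (\<Union>q. \<Union>k. \<Union>m. A q k \<inter> F q m)"
    by (rule AE_I'[OF Nnull]) auto
  with H AE_space show ?thesis
  proof eventually_elim
    case (elim \<omega>)
    then have \<omega>: "\<omega> \<in> space M" by simp
    obtain q k where qk: "inverse (real (Suc k)) \<le> measure (\<nu> \<omega>) {d q<..}"
      using nu_pos_part[OF \<omega>] elim d_def by auto
    then have "\<omega> \<in> A q k" unfolding A_def using \<omega> by auto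
    then have "\<forall>m. \<omega> \<notin> F q m" using elim by auto
    then have inf: "\<forall>m. \<exists>i\<ge>m. d q < v i \<omega>" unfolding F_def using \<omega> by (auto simp: not_le)
    have "(\<Sum>j. sbw (\<lambda>i. v i \<omega>) j) = 1"
      by (rule sb01.sbw_sum1[OF sb01_v[OF \<omega>], of "d q"]) (use inf d_def in auto)
    then show ?case using sum_sbw[OF \<omega>] by simp
  qed
qed

end


lemma msupport_meets:
  fixes P :: "'a::second_countable_topology measure"
  assumes sP: "sets P = sets borel" and C: "C \<in> sets borel" and pos: "emeasure P C > 0"
  shows "C \<inter> msupport P \<noteq> {}"
proof
  assume empty: "C \<inter> msupport P = {}"
  obtain B :: "'a set set" where Bc: "countable B" and Bb: "topological_basis B"
    using ex_countable_basis by blast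
  define Z where "Z = (\<Union>b\<in>{b\<in>B. emeasure P b = 0}. b)"
  have Bo: "b \<in> B \<Longrightarrow> open b" for b using Bb topological_basis_open by blast
  have Zn: "Z \<in> null_sets P"
    unfolding Z_def
  proof (rule null_sets_UN')
    show "countable {b \<in> B. emeasure P b = 0}" using Bc by simp
    fix b assume "b \<in> {b \<in> B. emeasure P b = 0}"
    then show "b \<in> null_sets P" using Bo sP by (auto simp: null_sets_def)
  qed
  have "C \<subseteq> Z"
  proof
    fix x assume xC: "x \<in> C"
    then have "x \<notin> msupport P" using empty by auto
    then obtain U where U: "open U" "x \<in> U" "\<not> emeasure P U > 0"
      unfolding msupport_def by auto
    then have U0: "emeasure P U = 0" by (simp add: not_gr_zero)
    obtain V where V: "V \<in> B" "x \<in> V" "V \<subseteq> U"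
      using topological_basisE[OF Bb U(1) U(2)] by blast
    have "emeasure P V \<le> emeasure P U"
      using V U sP Bo by (intro emeasure_mono) auto
    then have "emeasure P V = 0" using U0 by simp
    then show "x \<in> Z" unfolding Z_def using V by auto
  qed
  then have "C \<in> null_sets P" using Zn C sP by (intro null_sets_subset[OF Zn]) auto
  then show False using pos by (simp add: null_sets_def)
qed

lemma common_bound:
  fixes fs :: "('a::topological_space \<Rightarrow> real) list"
  assumes "\<forall>f\<in>set fs. bounded_continuous f"
  shows "\<exists>B\<ge>1. \<forall>f\<in>set fs. \<forall>y. \<bar>f y\<bar> \<le> B"
  using assms
proof (induction fs)
  case Nil then show ?case by auto
next
  case (Cons g gs)
  then obtain B where B: "B \<ge> 1" "\<forall>f\<in>set gs. \<forall>y. \<bar>f y\<bar> \<le> B" by auto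
  have "bounded (range g)" using Cons.prems by (simp add: bounded_continuous_def)
  then obtain a where a: "\<forall>y. \<bar>g y\<bar> \<le> a" unfolding bounded_iff by auto
  show ?case
  proof (rule exI[of _ "max a B"], intro conjI ballI allI)
    show "1 \<le> max a B" using B by simp
    fix f y assume "f \<in> set (g # gs)"
    then have "f = g \<or> f \<in> set gs" by simp
    then show "\<bar>f y\<bar> \<le> max a B"
    proof
      assume "f = g" then show ?thesis using a[rule_format, of y] by simp
    next
      assume "f \<in> set gs" then show ?thesis using B(2) by (meson max.coboundedI2)
    qed
  qed
qed

lemma floor_eq_close:
  fixes a b :: real
  assumes "\<lfloor>a\<rfloor> = \<lfloor>b\<rfloor>"
  shows "\<bar>a - b\<bar> < 1"
proof -
  have "of_int \<lfloor>a\<rfloor> \<le> a" "a < of_int \<lfloor>a\<rfloor> + 1" by linarith+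
  moreover have "of_int \<lfloor>b\<rfloor> \<le> b" "b < of_int \<lfloor>b\<rfloor> + 1" by linarith+
  ultimately show ?thesis using assms by (simp add: abs_less_iff) linarith
qed

lemma cell_borel:
  fixes fs :: "('a::topological_space \<Rightarrow> real) list"
  assumes "\<forall>f\<in>set fs. f \<in> borel_measurable borel"
  shows "{y. map (\<lambda>f. \<lfloor>f y / \<delta>\<rfloor>) fs = k} \<in> sets borel"
  using assms
proof (induction fs arbitrary: k)
  case Nil then show ?case by (cases k) auto
next
  case (Cons g gs)
  show ?case
  proof (cases k)
    case Nil then show ?thesis by simp
  next
    case (Cons a k')
    have gm[measurable]: "g \<in> borel_measurable borel" using Cons.prems by simp
    have "{y. \<lfloor>g y / \<delta>\<rfloor> = a} = {y. of_int a \<le> g y / \<delta> \<and> g y / \<delta> < of_int a + 1}"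
      by (auto simp: floor_eq_iff)
    also have "\<dots> \<in> sets borel" by measurable
    finally have "{y. \<lfloor>g y / \<delta>\<rfloor> = a} \<in> sets borel" .
    moreover have "{y. map (\<lambda>f. \<lfloor>f y / \<delta>\<rfloor>) gs = k'} \<in> sets borel" using Cons.IH Cons.prems by simp
    ultimately have "{y. \<lfloor>g y / \<delta>\<rfloor> = a} \<inter> {y. map (\<lambda>f. \<lfloor>f y / \<delta>\<rfloor>) gs = k'} \<in> sets borel" by blast
    moreover have "{y. map (\<lambda>f. \<lfloor>f y / \<delta>\<rfloor>) (g # gs) = k} = {y. \<lfloor>g y / \<delta>\<rfloor> = a} \<inter> {y. map (\<lambda>f. \<lfloor>f y / \<delta>\<rfloor>) gs = k'}"
      using Cons by auto
    ultimately show ?thesis by simp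
  qed
qed

lemma discretize:
  fixes P :: "'a::polish_space measure" and fs :: "('a \<Rightarrow> real) list"
  assumes P: "P \<in> borel_probs" and fs: "\<forall>f\<in>set fs. bounded_continuous f" and \<delta>: "0 < \<delta>"
  shows "\<exists>(L::nat) x (p::nat \<Rightarrow> real). (\<forall>l<L. x l \<in> msupport P) \<and> (\<forall>l<L. 0 \<le> p l) \<and> (\<Sum>l<L. p l) = 1 \<and>
     (\<forall>f\<in>set fs. \<bar>(\<integral>y. f y \<partial>P) - (\<Sum>l<L. p l * f (x l))\<bar> \<le> \<delta>)"
proof -
  interpret prob_space P using P by (simp add: borel_probs_def)
  have sP: "sets P = sets borel" using P by (simp add: borel_probs_def)
  have spP: "space P = UNIV" using sets_eq_imp_space_eq[OF sP] by simp
  obtain B where B: "B \<ge> 1" "\<forall>f\<in>set fs. \<forall>y. \<bar>f y\<bar> \<le> B" using common_bound[OF fs] by blast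
  have fm: "\<forall>f\<in>set fs. f \<in> borel_measurable borel"
    using fs by (auto simp: bounded_continuous_def intro: borel_measurable_continuous_onI)
  define K where "K y = map (\<lambda>f. \<lfloor>f y / \<delta>\<rfloor>) fs" for y
  define C where "C k = {y. K y = k}" for k
  have Cb: "C k \<in> sets borel" for k unfolding C_def K_def by (rule cell_borel[OF fm])
  have CP: "C k \<in> sets P" for k using Cb sP by simp
  define R :: int where "R = \<lceil>B / \<delta>\<rceil>"
  have Kr: "range K \<subseteq> {xs. set xs \<subseteq> {-R..R} \<and> length xs = length fs}"
  proof clarsimp
    fix y
    show "set (K y) \<subseteq> {-R..R} \<and> length (K y) = length fs"
    proof
      show "length (K y) = length fs" by (simp add: K_def)
      show "set (K y) \<subseteq> {-R..R}"
      proof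
        fix z assume "z \<in> set (K y)"
        then obtain f where f: "f \<in> set fs" "z = \<lfloor>f y / \<delta>\<rfloor>" unfolding K_def by auto
        have "\<bar>f y\<bar> \<le> B" using B f by auto
        then have "\<bar>f y\<bar> / \<delta> \<le> B / \<delta>" using \<delta> by (rule divide_right_mono[OF _ less_imp_le])
        then have "\<bar>f y / \<delta>\<bar> \<le> B / \<delta>" using abs_div_pos[OF \<delta>, of "f y"] by simp
        moreover have "B / \<delta> \<le> of_int R" unfolding R_def by simp
        ultimately have a1: "\<bar>f y / \<delta>\<bar> \<le> of_int R" by (rule order_trans)
        have "- of_int R \<le> f y / \<delta>" "f y / \<delta> \<le> of_int R" using abs_le_D1[OF a1] abs_le_D2[OF a1] by linarith+
        then have "- R \<le> \<lfloor>f y / \<delta>\<rfloor>" "\<lfloor>f y / \<delta>\<rfloor> \<le> R"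
          by (simp_all add: le_floor_iff floor_le_iff)
        then show "z \<in> {-R..R}" using f by simp
      qed
    qed
  qed
  have finK: "finite (range K)"
    by (rule finite_subset[OF Kr finite_lists_length_eq[OF finite_atLeastAtMost_int]])
  define xk where "xk k = (if 0 < measure P (C k) then (SOME y. y \<in> C k \<inter> msupport P) else (SOME y. y \<in> C k))" for k
  have xkC: "xk k \<in> C k" if "k \<in> range K" for k
  proof (cases "0 < measure P (C k)")
    case True
    have "C k \<inter> msupport P \<noteq> {}"
      by (rule msupport_meets[OF sP Cb]) (use True in \<open>simp add: emeasure_eq_measure\<close>)
    then have "\<exists>y. y \<in> C k \<inter> msupport P" by blast
    then have "(SOME y. y \<in> C k \<inter> msupport P) \<in> C k \<inter> msupport P" by (rule someI_ex)
    then show ?thesis unfolding xk_def using True by simp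
  next
    case False
    have "C k \<noteq> {}" using that unfolding C_def by auto
    then have "\<exists>y. y \<in> C k" by blast
    then have "(SOME y. y \<in> C k) \<in> C k" by (rule someI_ex)
    then show ?thesis unfolding xk_def using False by simp
  qed
  have xkS: "xk k \<in> msupport P" if "0 < measure P (C k)" for k
  proof -
    have "C k \<inter> msupport P \<noteq> {}"
      by (rule msupport_meets[OF sP Cb]) (use that in \<open>simp add: emeasure_eq_measure\<close>)
    then have "\<exists>y. y \<in> C k \<inter> msupport P" by blast
    then have "(SOME y. y \<in> C k \<inter> msupport P) \<in> C k \<inter> msupport P" by (rule someI_ex)
    then show ?thesis unfolding xk_def using that by simp
  qed
  define KS where "KS = {k \<in> range K. 0 < measure P (C k)}"
  have finKS: "finite KS" unfolding KS_def using finK by simp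
  obtain h where h: "bij_betw h {0..<card KS} KS" using ex_bij_betw_nat_finite[OF finKS] by blast
  define L where "L = card KS"
  define x where "x l = xk (h l)" for l
  define p where "p l = measure P (C (h l))" for l
  have hS: "l < L \<Longrightarrow> h l \<in> KS" for l using h unfolding L_def bij_betw_def by auto
  have reidx: "(\<Sum>l<L. g (h l)) = (\<Sum>k\<in>KS. g k)" for g :: "int list \<Rightarrow> real"
    using sum.reindex_bij_betw[OF h, of g] unfolding L_def by (simp add: atLeast0LessThan)
  have ext: "(\<Sum>k\<in>KS. measure P (C k) * g k) = (\<Sum>k\<in>range K. measure P (C k) * g k)" for g :: "int list \<Rightarrow> real"
  proof (rule sum.mono_neutral_left[OF finK])
    show "KS \<subseteq> range K" unfolding KS_def by auto
    show "\<forall>i\<in>range K - KS. measure P (C i) * g i = 0"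
      unfolding KS_def using measure_nonneg[of P] by (auto simp: not_less order.antisym)
  qed
  have disj: "disjoint_family_on C (range K)" unfolding disjoint_family_on_def C_def by auto
  have UC: "(\<Union>k\<in>range K. C k) = UNIV" unfolding C_def by auto
  have total: "(\<Sum>k\<in>range K. measure P (C k)) = 1"
    using finite_measure_finite_Union[OF finK _ disj] CP UC prob_space spP by auto
  have psum: "(\<Sum>l<L. p l) = 1"
    using reidx[of "\<lambda>k. measure P (C k)"] ext[of "\<lambda>_. 1"] total unfolding p_def by simp
  have err: "\<bar>(\<integral>y. f y \<partial>P) - (\<Sum>l<L. p l * f (x l))\<bar> \<le> \<delta>" if f: "f \<in> set fs" for f
  proof -
    have fmf: "f \<in> borel_measurable P" using fm f sP by (simp add: measurable_cong_sets[OF sP refl])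
    have fint: "integrable P f" by (rule integrable_const_bound[of _ B]) (use B f fmf in auto)
    define hh where "hh y = (\<Sum>k\<in>range K. f (xk k) * indicator (C k) y)" for y
    have hh_eq: "hh y = f (xk (K y))" for y
    proof -
      have "hh y = (\<Sum>k\<in>range K. if K y = k then f (xk k) else 0)"
        unfolding hh_def by (rule sum.cong) (auto simp: indicator_def C_def)
      also have "\<dots> = f (xk (K y))" using finK by (simp add: sum.delta)
      finally show ?thesis .
    qed
    have close: "\<bar>f y - hh y\<bar> \<le> \<delta>" for y
    proof -
      have "xk (K y) \<in> C (K y)" using xkC by simp
      then have "K (xk (K y)) = K y" unfolding C_def by simp
      then have "\<lfloor>f (xk (K y)) / \<delta>\<rfloor> = \<lfloor>f y / \<delta>\<rfloor>" using f unfolding K_def by (auto simp: map_eq_conv)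
      then have a0: "\<bar>f y / \<delta> - f (xk (K y)) / \<delta>\<bar> < 1" by (intro floor_eq_close) simp
      have b0: "f y / \<delta> - f (xk (K y)) / \<delta> = (f y - f (xk (K y))) / \<delta>"
        by (simp add: diff_divide_distrib)
      have c0: "\<bar>(f y - f (xk (K y))) / \<delta>\<bar> = \<bar>f y - f (xk (K y))\<bar> / \<delta>"
        using \<delta> by (simp add: abs_divide)
      from a0[unfolded b0 c0] have "\<bar>f y - f (xk (K y))\<bar> / \<delta> < 1" .
      then have "\<bar>f y - f (xk (K y))\<bar> < \<delta>" using \<delta> by (simp add: pos_divide_less_eq)
      then show ?thesis using hh_eq by simp
    qed
    have hint: "integrable P (\<lambda>y. f (xk k) * indicator (C k) y)" for k
      using CP by (intro integrable_mult_right) (simp add: emeasure_eq_measure)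
    have hhint: "integrable P hh" unfolding hh_def using hint by (intro Bochner_Integration.integrable_sum) auto
    have int_hh: "(\<integral>y. hh y \<partial>P) = (\<Sum>k\<in>range K. measure P (C k) * f (xk k))"
      unfolding hh_def by (subst Bochner_Integration.integral_sum) (use hint CP in \<open>auto simp: mult.commute\<close>)
    have "\<bar>(\<integral>y. f y \<partial>P) - (\<integral>y. hh y \<partial>P)\<bar> = \<bar>(\<integral>y. f y - hh y \<partial>P)\<bar>"
      using fint hhint by simp
    also have "\<dots> \<le> (\<integral>y. \<bar>f y - hh y\<bar> \<partial>P)"
      using integral_norm_bound[of P "\<lambda>y. f y - hh y"] by simp
    also have "\<dots> \<le> (\<integral>y. \<delta> \<partial>P)"
      using fint hhint close by (intro integral_mono) auto
    also have "\<dots> = \<delta>" using prob_space by simp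
    finally have e1: "\<bar>(\<integral>y. f y \<partial>P) - (\<integral>y. hh y \<partial>P)\<bar> \<le> \<delta>" .
    have "(\<Sum>l<L. p l * f (x l)) = (\<Sum>k\<in>range K. measure P (C k) * f (xk k))"
      using reidx[of "\<lambda>k. measure P (C k) * f (xk k)"] ext[of "\<lambda>k. f (xk k)"]
      unfolding p_def x_def by simp
    then show ?thesis using e1 int_hh by simp
  qed
  have A1: "\<forall>l<L. x l \<in> msupport P" unfolding x_def using hS xkS KS_def by auto
  have A2: "\<forall>l<L. 0 \<le> p l" unfolding p_def by simp
  have A3: "\<forall>f\<in>set fs. \<bar>(\<integral>y. f y \<partial>P) - (\<Sum>l<L. p l * f (x l))\<bar> \<le> \<delta>" using err by blast
  show ?thesis using A1 A2 psum A3 by blast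
qed


lemma weights_choice:
  fixes p :: "nat \<Rightarrow> real" and L :: nat
  assumes p0: "\<forall>l<L. 0 \<le> p l" and ps: "(\<Sum>l<L. p l) = 1" and \<eta>: "0 < \<eta>" and \<epsilon>0: "0 < \<epsilon>0"
  shows "\<exists>a b (n::nat \<Rightarrow> nat). 0 < a \<and> a < b \<and> b < \<epsilon>0 \<and> b < 1 \<and> n 0 = 0 \<and> mono n \<and>
     (\<forall>u. (\<forall>i<n L. a < u i \<and> u i < b) \<longrightarrow>
        (\<forall>l\<le>L. \<bar>(\<Prod>i<n l. 1 - u i) - (1 - (\<Sum>l'<l. p l'))\<bar> \<le> \<eta>))"
proof -
  define e1 where "e1 = min \<epsilon>0 1"
  have e1: "0 < e1" "e1 \<le> \<epsilon>0" "e1 \<le> 1" using \<epsilon>0 unfolding e1_def by auto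
  define a where "a = min e1 \<eta> / 4"
  have a: "0 < a" "a \<le> \<eta> / 4" "a \<le> e1 / 4" using e1 \<eta> unfolding a_def by auto
  define q where "q = 1 - a"
  have q: "0 \<le> q" "q < 1" using a e1 unfolding q_def by auto
  define nn where "nn t = (LEAST n. q ^ n \<le> max t (\<eta>/2))" for t
  have ex: "\<exists>n. q ^ n \<le> max t (\<eta>/2)" for t
  proof -
    have "(\<lambda>n. q ^ n) \<longlonglongrightarrow> 0" using q by (intro LIMSEQ_power_zero) auto
    from order_tendstoD(2)[OF this, of "\<eta>/2"] \<eta> obtain N where "\<forall>n\<ge>N. q ^ n < \<eta>/2"
      unfolding eventually_sequentially by auto
    then have "q ^ N \<le> max t (\<eta>/2)" by (simp add: less_imp_le max.coboundedI2)
    then show ?thesis by blast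
  qed
  have nn_le: "q ^ nn t \<le> max t (\<eta>/2)" for t
    unfolding nn_def by (rule LeastI_ex[OF ex])
  have nn_min: "m < nn t \<Longrightarrow> \<not> q ^ m \<le> max t (\<eta>/2)" for m t
    unfolding nn_def by (rule not_less_Least)
  have approx: "\<bar>q ^ nn t - t\<bar> \<le> \<eta>/2" if t: "0 \<le> t" "t \<le> 1" for t
  proof (cases "nn t")
    case 0
    then have "1 \<le> max t (\<eta>/2)" using nn_le[of t] by simp
    then show ?thesis using 0 t \<eta> by (auto simp: max_def split: if_splits)
  next
    case (Suc s)
    have "\<not> q ^ s \<le> max t (\<eta>/2)" using nn_min[of s t] Suc by simp
    then have gt: "max t (\<eta>/2) < q ^ s" by (simp only: not_le)
    have qs1: "q ^ s \<le> 1" using q by (simp add: power_le_one)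
    have "q ^ Suc s = q ^ s - a * q ^ s" by (simp add: q_def algebra_simps)
    also have "\<dots> \<ge> q ^ s - a" using qs1 a by (simp add: mult_left_le)
    finally have lo: "q ^ Suc s \<ge> q ^ s - a" .
    have hi: "q ^ Suc s \<le> max t (\<eta>/2)" using nn_le[of t] Suc by simp
    have lo2: "max t (\<eta>/2) - a < q ^ Suc s" using lo gt by linarith
    show ?thesis
    proof (cases "\<eta>/2 \<le> t")
      case True
      then have "max t (\<eta>/2) = t" by simp
      then show ?thesis unfolding Suc abs_le_iff using lo2 hi a by linarith
    next
      case False
      then have "max t (\<eta>/2) = \<eta>/2" by simp
      then show ?thesis unfolding Suc abs_le_iff using lo2 hi a t False by linarith
    qed
  qed
  have mono_nn: "t \<le> t' \<Longrightarrow> nn t' \<le> nn t" for t t'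
  proof -
    assume "t \<le> t'"
    then have "q ^ nn t \<le> max t' (\<eta>/2)" using nn_le[of t] by (meson max.mono order_refl order_trans)
    then show "nn t' \<le> nn t" unfolding nn_def[of t'] by (rule Least_le)
  qed
  define t where "t l = 1 - (\<Sum>l'<l. p l')" for l
  have t01: "0 \<le> t l \<and> t l \<le> 1" if "l \<le> L" for l
  proof -
    have "(\<Sum>l'<l. p l') \<le> (\<Sum>l'<L. p l')"
      using that p0 by (intro sum_mono2) auto
    moreover have "0 \<le> (\<Sum>l'<l. p l')" using that p0 by (intro sum_nonneg) auto
    ultimately show ?thesis using ps unfolding t_def by simp
  qed
  have tdec: "l \<le> l' \<Longrightarrow> l' \<le> L \<Longrightarrow> t l' \<le> t l" for l l'
  proof -
    assume "l \<le> l'" "l' \<le> L"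
    then have "(\<Sum>l'<l. p l') \<le> (\<Sum>l'<l'. p l')" using p0 by (intro sum_mono2) auto
    then show "t l' \<le> t l" unfolding t_def by simp
  qed
  define n where "n l = nn (t (min l L))" for l
  have n0: "n 0 = 0"
    unfolding n_def nn_def t_def by (rule Least_eq_0) simp
  have monon: "mono n"
  proof (rule monoI)
    fix l l' :: nat assume "l \<le> l'"
    then show "n l \<le> n l'" unfolding n_def by (intro mono_nn tdec) auto
  qed
  define N where "N = n L"
  define d where "d = min (\<eta> / (2 * (real N + 1))) (e1 / 4)"
  have d: "0 < d" "d \<le> e1 / 4" "real N * d \<le> \<eta> / 2"
  proof -
    have "0 < \<eta> / (2 * (real N + 1))" using \<eta> by simp
    then show "0 < d" using e1 unfolding d_def by simp
    show "d \<le> e1 / 4" unfolding d_def by (rule min.cobounded2)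
    have "real N * d \<le> real N * (\<eta> / (2 * (real N + 1)))" unfolding d_def
      by (intro mult_left_mono) auto
    also have "\<dots> \<le> \<eta> / 2" using \<eta> by (simp add: field_simps)
    finally show "real N * d \<le> \<eta> / 2" .
  qed
  define b where "b = a + d"
  have ab: "a < b" "b < \<epsilon>0" "b < 1" using a d e1 unfolding b_def by auto
  have main: "\<bar>(\<Prod>i<n l. 1 - u i) - (1 - (\<Sum>l'<l. p l'))\<bar> \<le> \<eta>"
    if u: "\<forall>i<n L. a < u i \<and> u i < b" and l: "l \<le> L" for u l
  proof -
    have nl: "n l \<le> N" unfolding N_def using monon l by (simp add: monoD)
    have uu: "a < u i \<and> u i < b" if "i < n l" for i using u nl that unfolding N_def by auto
    have "\<bar>(\<Prod>i<n l. 1 - u i) - (\<Prod>i<n l. q)\<bar> \<le> (\<Sum>i<n l. \<bar>(1 - u i) - q\<bar>)"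
      by (rule prod_diff_le) (use uu q ab a in \<open>force simp: q_def\<close>)+
    also have "\<dots> \<le> real (n l) * d"
    proof -
      have "(\<Sum>i<n l. \<bar>(1 - u i) - q\<bar>) \<le> of_nat (card {..<n l}) * d"
      proof (rule sum_bounded_above)
        fix i assume "i \<in> {..<n l}"
        then have "a < u i" "u i < a + d" using uu unfolding b_def by auto
        then show "\<bar>(1 - u i) - q\<bar> \<le> d" unfolding q_def abs_le_iff using d by linarith
      qed
      then show ?thesis by simp
    qed
    also have "\<dots> \<le> real N * d" using nl d by (intro mult_right_mono) auto
    finally have e1': "\<bar>(\<Prod>i<n l. 1 - u i) - q ^ n l\<bar> \<le> \<eta> / 2" using d by simp
    have e2: "\<bar>q ^ n l - t l\<bar> \<le> \<eta> / 2" unfolding n_def using approx t01 l by simp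
    show ?thesis using e1' e2 unfolding t_def by linarith
  qed
  show ?thesis
    by (rule exI[of _ a], rule exI[of _ b], rule exI[of _ n]) (use a ab n0 monon main in \<open>simp add: N_def\<close>)
qed


context esb
begin

abbreviation "mu \<equiv> ssp_measure (sb_weight v) \<xi> \<mu>0"

definition Rf :: "('a \<Rightarrow> real) \<Rightarrow> 'b \<Rightarrow> real" where
  "Rf f \<omega> = (\<Sum>j. sb_weight v j \<omega> * f (\<xi> j \<omega>)) + (1 - (\<Sum>j. sb_weight v j \<omega>)) * (\<integral>x. f x \<partial>\<mu>0)"

lemma sspw_at: "\<omega> \<in> space M \<Longrightarrow> sspw (sb_weight v) \<mu>0 \<omega>"
proof -
  assume \<omega>: "\<omega> \<in> space M"
  interpret S: sb01 "\<lambda>i. v i \<omega>" by (rule sb01_v[OF \<omega>])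
  show ?thesis
    by (rule sspw.intro)
       (use S.sbw_nonneg S.sbw_summable S.sbw_le1 mu0_prob mu0_sets in \<open>simp_all add: sb_weight_sbw\<close>)
qed

lemma mu_probs: "\<omega> \<in> space M \<Longrightarrow> mu \<omega> \<in> borel_probs"
  using sspw.prob_m[OF sspw_at, of \<omega> \<xi>] sspw.sets_m[OF sspw_at, of \<omega> \<xi>]
  by (simp add: borel_probs_def)

lemma bc_meas: "bounded_continuous f \<Longrightarrow> f \<in> borel_measurable borel"
  by (auto simp: bounded_continuous_def intro: borel_measurable_continuous_onI)

lemma bc_bound: "bounded_continuous f \<Longrightarrow> \<exists>B. \<forall>y. \<bar>f y\<bar> \<le> B"
  unfolding bounded_continuous_def bounded_iff by auto

lemma mu_int:
  assumes \<omega>: "\<omega> \<in> space M" and f: "bounded_continuous f"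
  shows "(\<integral>x. f x \<partial>mu \<omega>) = Rf f \<omega>"
proof -
  obtain B where B: "\<And>y. \<bar>f y\<bar> \<le> B" using bc_bound[OF f] by blast
  show ?thesis
    unfolding Rf_def using sspw.integral_m[OF sspw_at[OF \<omega>] bc_meas[OF f] B, of \<xi>] by simp
qed

lemma xi_meas[measurable]: "\<xi> i \<in> borel_measurable M"
  using xi_indep unfolding P.indep_vars_def by auto

lemma sbw_meas[measurable]: "(\<lambda>\<omega>. sb_weight v j \<omega>) \<in> borel_measurable M"
  unfolding sb_weight_def by measurable

lemma Rf_meas:
  assumes f: "bounded_continuous f"
  shows "Rf f \<in> borel_measurable M"
proof -
  have [measurable]: "f \<in> borel_measurable borel" by (rule bc_meas[OF f])
  show ?thesis unfolding Rf_def[abs_def] by measurable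
qed

lemma T_eq:
  assumes "\<forall>f\<in>set fs. bounded_continuous f"
  shows "{\<omega> \<in> space M. mu \<omega> \<in> weak_nbhd P fs \<epsilon>} =
         {\<omega> \<in> space M. \<forall>f\<in>set fs. \<bar>Rf f \<omega> - (\<integral>x. f x \<partial>P)\<bar> < \<epsilon>}"
  using assms mu_probs mu_int unfolding weak_nbhd_def by auto

lemma T_sets:
  assumes "\<forall>f\<in>set fs. bounded_continuous f"
  shows "{\<omega> \<in> space M. \<forall>f\<in>set fs. \<bar>Rf f \<omega> - c f\<bar> < \<epsilon>} \<in> sets M"
  using assms
proof (induction fs)
  case Nil then show ?case by simp
next
  case (Cons g gs)
  have [measurable]: "Rf g \<in> borel_measurable M" using Cons.prems by (intro Rf_meas) simp
  have "{\<omega> \<in> space M. \<bar>Rf g \<omega> - c g\<bar> < \<epsilon>} \<in> sets M" by measurable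
  moreover have "{\<omega> \<in> space M. \<forall>f\<in>set gs. \<bar>Rf f \<omega> - c f\<bar> < \<epsilon>} \<in> sets M"
    using Cons by simp
  ultimately have "{\<omega> \<in> space M. \<bar>Rf g \<omega> - c g\<bar> < \<epsilon>} \<inter> {\<omega> \<in> space M. \<forall>f\<in>set gs. \<bar>Rf f \<omega> - c f\<bar> < \<epsilon>} \<in> sets M"
    by blast
  moreover have "{\<omega> \<in> space M. \<forall>f\<in>set (g # gs). \<bar>Rf f \<omega> - c f\<bar> < \<epsilon>} =
     {\<omega> \<in> space M. \<bar>Rf g \<omega> - c g\<bar> < \<epsilon>} \<inter> {\<omega> \<in> space M. \<forall>f\<in>set gs. \<bar>Rf f \<omega> - c f\<bar> < \<epsilon>}"
    by auto
  ultimately show ?case by simp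
qed

end


context esb
begin

lemma part1_sub: "law_support M mu \<subseteq> {P \<in> borel_probs. msupport P \<subseteq> msupport \<mu>0}"
proof
  fix P assume PL: "P \<in> law_support M mu"
  have Pb: "P \<in> borel_probs" using PL by (simp add: law_support_def)
  have Lc: "\<And>fs \<epsilon>. (\<forall>f\<in>set fs. bounded_continuous f) \<Longrightarrow> \<epsilon> > 0 \<Longrightarrow>
      measure M {\<omega> \<in> space M. mu \<omega> \<in> weak_nbhd P fs \<epsilon>} > 0"
    using PL by (simp add: law_support_def)
  interpret PP: prob_space P using Pb by (simp add: borel_probs_def)
  have sP: "sets P = sets borel" using Pb by (simp add: borel_probs_def)
  interpret P0: prob_space \<mu>0 by (rule mu0_prob)
  have "msupport P \<subseteq> msupport \<mu>0"
  proof
    fix x assume xP: "x \<in> msupport P"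
    show "x \<in> msupport \<mu>0"
    proof (rule ccontr)
      assume "x \<notin> msupport \<mu>0"
      then obtain U where U: "open U" "x \<in> U" "\<not> emeasure \<mu>0 U > 0" unfolding msupport_def by auto
      then have U0: "emeasure \<mu>0 U = 0" by (simp add: not_gr_zero)
      obtain r where r: "0 < r" "ball x r \<subseteq> U" using open_contains_ball U by blast
      define f where "f y = max 0 (1 - dist y x / r)" for y
      have f01: "0 \<le> f y" "f y \<le> 1" for y unfolding f_def using r by auto
      have fc: "continuous_on UNIV f" unfolding f_def using r by (intro continuous_intros) auto
      have fbc: "bounded_continuous f"
        unfolding bounded_continuous_def
      proof
        show "continuous_on UNIV f" by (rule fc)
        have "range f \<subseteq> {0..1}" using f01 by auto
        then show "bounded (range f)" by (rule bounded_subset[OF bounded_closed_interval])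
      qed
      have f0: "f y = 0" if "y \<notin> U" for y
      proof -
        have "y \<notin> ball x r" using that r by auto
        then have "r \<le> dist y x" by (simp add: dist_commute not_less)
        then have "1 \<le> dist y x / r" using r by simp
        then show ?thesis unfolding f_def by simp
      qed
      have fhalf: "1/2 \<le> f y" if "y \<in> ball x (r/2)" for y
      proof -
        have "dist y x < r / 2" using that by (simp add: dist_commute)
        then have "dist y x / r < 1/2" using r by (simp add: divide_less_eq)
        then have "1/2 \<le> 1 - dist y x / r" by linarith
        then show ?thesis unfolding f_def using max.cobounded2[of 0 "1 - dist y x / r"] by linarith
      qed
      have fmb: "f \<in> borel_measurable borel" by (rule bc_meas[OF fbc])
      have fmP: "f \<in> borel_measurable P" using fmb by (simp add: measurable_cong_sets[OF sP refl])
      have fm0: "f \<in> borel_measurable \<mu>0" using fmb by (simp add: measurable_cong_sets[OF mu0_sets refl])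
      have fintP: "integrable P f" by (rule PP.integrable_const_bound[of _ 1]) (use f01 fmP in auto)
      have fint0: "integrable \<mu>0 f" by (rule P0.integrable_const_bound[of _ 1]) (use f01 fm0 in auto)
      have bP: "ball x (r/2) \<in> sets P" using sP by simp
      have "emeasure P (ball x (r/2)) > 0"
        using xP r unfolding msupport_def by auto
      then have bpos: "0 < measure P (ball x (r/2))" by (simp add: PP.emeasure_eq_measure)
      have iint: "integrable P (\<lambda>y. (1/2::real) * indicator (ball x (r/2)) y)"
        using bP by (intro integrable_mult_right) (simp add: PP.emeasure_eq_measure)
      have "(\<integral>y. (1/2::real) * indicator (ball x (r/2)) y \<partial>P) \<le> (\<integral>y. f y \<partial>P)"
        by (rule integral_mono[OF iint fintP]) (use fhalf f01 in \<open>auto simp: indicator_def\<close>)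
      moreover have "(\<integral>y. (1/2::real) * indicator (ball x (r/2)) y \<partial>P) = (1/2) * measure P (ball x (r/2))"
        using bP by (simp add: PP.emeasure_eq_measure)
      ultimately have epos: "0 < (\<integral>y. f y \<partial>P)" using bpos by simp
      define e where "e = (\<integral>y. f y \<partial>P)"
      have e: "0 < e" using epos e_def by simp
      have pos: "measure M {\<omega> \<in> space M. mu \<omega> \<in> weak_nbhd P [f] e} > 0"
        using Lc[of "[f]" e] fbc e by simp
      have Ub: "U \<in> sets borel" using U by simp
      define Z where "Z = (\<Union>j. \<xi> j -` U \<inter> space M)"
      have Zn: "Z \<in> null_sets M"
        unfolding Z_def
      proof (rule null_sets_UN)
        fix j
        have S: "\<xi> j -` U \<inter> space M \<in> sets M" using Ub by (rule measurable_sets[OF xi_meas])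
        have "emeasure M (\<xi> j -` U \<inter> space M) = emeasure (distr M borel (\<xi> j)) U"
          using Ub by (simp add: emeasure_distr)
        also have "\<dots> = 0" using xi_law U0 by simp
        finally show "\<xi> j -` U \<inter> space M \<in> null_sets M" using S by (simp add: null_sets_def)
      qed
      have int0: "(\<integral>y. f y \<partial>\<mu>0) = 0"
      proof -
        have iU: "integrable \<mu>0 (indicator U :: 'a \<Rightarrow> real)"
          using Ub mu0_sets by (simp add: P0.emeasure_eq_measure)
        have "(\<integral>y. f y \<partial>\<mu>0) \<le> (\<integral>y. indicator U y \<partial>\<mu>0)"
          by (rule integral_mono[OF fint0 iU]) (use f01 f0 in \<open>auto simp: indicator_def\<close>)
        also have "\<dots> = measure \<mu>0 U" using Ub mu0_sets by (simp add: P0.emeasure_eq_measure)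
        also have "\<dots> = 0" using U0 by (simp add: measure_def)
        finally have "(\<integral>y. f y \<partial>\<mu>0) \<le> 0" .
        moreover have "0 \<le> (\<integral>y. f y \<partial>\<mu>0)" using f01 by (simp add: integral_nonneg)
        ultimately show ?thesis by simp
      qed
      have sub: "{\<omega> \<in> space M. mu \<omega> \<in> weak_nbhd P [f] e} \<subseteq> Z"
      proof
        fix \<omega> assume "\<omega> \<in> {\<omega> \<in> space M. mu \<omega> \<in> weak_nbhd P [f] e}"
        then have \<omega>: "\<omega> \<in> space M" and cl: "\<bar>Rf f \<omega> - e\<bar> < e"
          using T_eq[of "[f]" P e] fbc e_def by auto
        show "\<omega> \<in> Z"
        proof (rule ccontr)
          assume "\<omega> \<notin> Z"
          then have "\<forall>j. \<xi> j \<omega> \<notin> U" using \<omega> by (auto simp: Z_def)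
          then have "Rf f \<omega> = 0" unfolding Rf_def using f0 int0 by simp
          then show False using cl by simp
        qed
      qed
      have "measure M {\<omega> \<in> space M. mu \<omega> \<in> weak_nbhd P [f] e} = 0"
      proof (cases "{\<omega> \<in> space M. mu \<omega> \<in> weak_nbhd P [f] e} \<in> sets M")
        case True
        then have "{\<omega> \<in> space M. mu \<omega> \<in> weak_nbhd P [f] e} \<in> null_sets M"
          using null_sets_subset[OF Zn _ sub] by simp
        then show ?thesis by (rule measure_eq_0_null_sets)
      next
        case False then show ?thesis by (simp add: measure_notin_sets)
      qed
      then show False using pos by simp
    qed
  qed
  then show "P \<in> {P \<in> borel_probs. msupport P \<subseteq> msupport \<mu>0}" using Pb by simp
qed

end


lemma regroup:
  fixes g :: "nat \<Rightarrow> real"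
  assumes "mono n" "n 0 = 0"
  shows "(\<Sum>j<n L. g j) = (\<Sum>l<L. \<Sum>j\<in>{n l..<n (Suc l)}. g j)"
proof (induction L)
  case 0 then show ?case using assms by simp
next
  case (Suc L)
  have "n L \<le> n (Suc L)" using assms(1) by (simp add: monoD)
  then have "(\<Sum>j<n (Suc L). g j) = (\<Sum>j<n L. g j) + (\<Sum>j\<in>{n L..<n (Suc L)}. g j)"
    using sum.atLeastLessThan_concat[of 0 "n L" "n (Suc L)" g] by (simp add: atLeast0LessThan)
  then show ?case using Suc by simp
qed

lemma core_estimate:
  fixes u :: "nat \<Rightarrow> real" and X :: "nat \<Rightarrow> 'a" and f :: "'a \<Rightarrow> real" and x :: "nat \<Rightarrow> 'a"
  assumes u01: "\<And>i. 0 \<le> u i \<and> u i \<le> 1"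
    and n0: "n 0 = 0" and mn: "mono n"
    and pa: "\<forall>l\<le>L. \<bar>(\<Prod>i<n l. 1 - u i) - (1 - (\<Sum>l'<l. p l'))\<bar> \<le> \<eta>"
    and ps: "(\<Sum>l<L. p l) = 1"
    and fB: "\<And>y. \<bar>f y\<bar> \<le> B" and I0: "\<bar>I0\<bar> \<le> B"
    and cl: "\<forall>l<L. \<forall>j\<in>{n l..<n (Suc l)}. \<bar>f (X j) - f (x l)\<bar> \<le> \<delta>"
    and \<delta>: "0 \<le> \<delta>"
  shows "\<bar>(\<Sum>j. sbw u j * f (X j)) + (1 - (\<Sum>j. sbw u j)) * I0 - (\<Sum>l<L. p l * f (x l))\<bar>
           \<le> B * \<eta> + \<delta> + 2 * \<eta> * B * real L"
proof -
  interpret S: sb01 u using u01 by unfold_locales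
  define w where "w = sbw u"
  define Pr where "Pr k = (\<Prod>i<k. 1 - u i)" for k
  define c where "c = 1 - (\<Sum>j. w j)"
  define N where "N = n L"
  have w0: "0 \<le> w j" for j unfolding w_def by (rule S.sbw_nonneg)
  have ws: "summable w" unfolding w_def by (rule S.sbw_summable)
  have c0: "0 \<le> c" using S.sbw_le1 unfolding c_def w_def by simp
  have B0: "0 \<le> B" using fB[of "X 0"] by linarith
  have wf_s: "summable (\<lambda>j. w j * f (X j))"
  proof (rule summable_comparison_test[of _ "\<lambda>j. w j * B"])
    show "\<exists>N. \<forall>n\<ge>N. norm (w n * f (X n)) \<le> w n * B"
      using fB w0 by (auto simp: abs_mult intro!: mult_left_mono)
    show "summable (\<lambda>j. w j * B)" using ws by (rule summable_mult2)
  qed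
  have part: "(\<Sum>j<k. w j) = 1 - Pr k" for k unfolding w_def Pr_def by (rule sbw_partial)
  have split: "(\<Sum>j. w j * f (X j)) = (\<Sum>j<N. w j * f (X j)) + (\<Sum>j. w (j + N) * f (X (j + N)))"
    using suminf_split_initial_segment[OF wf_s, of N] by simp
  have ts: "summable (\<lambda>j. w (j + N) * f (X (j + N)))"
    using wf_s by (subst summable_iff_shift) 
  have ws2: "summable (\<lambda>j. w (j + N))" using ws by (subst summable_iff_shift)
  have tailw: "(\<Sum>j. w (j + N)) = Pr N - c"
    using S.tail_eq[of N] unfolding w_def Pr_def c_def by simp
  have tb: "\<bar>\<Sum>j. w (j + N) * f (X (j + N))\<bar> \<le> B * (Pr N - c)"
  proof -
    have "(\<Sum>j. w (j + N) * f (X (j + N))) \<le> (\<Sum>j. w (j + N) * B)"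
      by (rule suminf_le[OF _ ts summable_mult2[OF ws2]]) (use fB w0 in \<open>auto intro: mult_left_mono simp: abs_le_iff\<close>)
    moreover have "(\<Sum>j. - (w (j + N) * B)) \<le> (\<Sum>j. w (j + N) * f (X (j + N)))"
    proof (rule suminf_le[OF _ _ ts])
      show "summable (\<lambda>j. - (w (j + N) * B))" using summable_minus[OF summable_mult2[OF ws2]] .
      fix j
      have "- B \<le> f (X (j + N))" using fB[of "X (j+N)"] by linarith
      then have "w (j + N) * (- B) \<le> w (j + N) * f (X (j + N))" using w0 by (rule mult_left_mono)
      then show "- (w (j + N) * B) \<le> w (j + N) * f (X (j + N))" by simp
    qed
    moreover have "(\<Sum>j. w (j + N) * B) = B * (Pr N - c)"
      using suminf_mult2[OF ws2, of B] tailw by (simp add: mult.commute)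
    moreover have "(\<Sum>j. - (w (j + N) * B)) = - (B * (Pr N - c))"
      using suminf_minus[OF summable_mult2[OF ws2, of B]] suminf_mult2[OF ws2, of B] tailw
      by (simp add: mult.commute)
    ultimately show ?thesis by (simp add: abs_le_iff)
  qed
  have cI: "\<bar>c * I0\<bar> \<le> c * B" using c0 I0 by (simp add: abs_mult mult_left_mono)
  have PrN: "Pr N \<le> \<eta>"
    using pa[rule_format, of L] ps unfolding Pr_def N_def by simp
  have step1: "\<bar>(\<Sum>j. w j * f (X j)) + c * I0 - (\<Sum>j<N. w j * f (X j))\<bar> \<le> B * \<eta>"
  proof -
    have "\<bar>(\<Sum>j. w j * f (X j)) + c * I0 - (\<Sum>j<N. w j * f (X j))\<bar>
        = \<bar>(\<Sum>j. w (j + N) * f (X (j + N))) + c * I0\<bar>" using split by simp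
    also have "\<dots> \<le> B * (Pr N - c) + c * B" using tb cI by linarith
    also have "\<dots> = B * Pr N" by (simp add: algebra_simps)
    also have "\<dots> \<le> B * \<eta>" using PrN B0 by (simp add: mult_left_mono)
    finally show ?thesis .
  qed
  define W where "W l = (\<Sum>j\<in>{n l..<n (Suc l)}. w j)" for l
  have Wl: "W l = Pr (n l) - Pr (n (Suc l))" for l
  proof -
    have "n l \<le> n (Suc l)" using mn by (simp add: monoD)
    then have "(\<Sum>j<n (Suc l). w j) - (\<Sum>j<n l. w j) = W l"
      unfolding W_def using sum_diff_nat_ivl[of 0 "n l" "n (Suc l)" w] by (simp add: atLeast0LessThan)
    then show ?thesis using part by simp
  qed
  have Wp: "\<bar>W l - p l\<bar> \<le> 2 * \<eta>" if "l < L" for l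
  proof -
    have a1: "\<bar>Pr (n l) - (1 - (\<Sum>l'<l. p l'))\<bar> \<le> \<eta>" using pa that unfolding Pr_def by simp
    have "Suc l \<le> L" using that by simp
    then have a2: "\<bar>Pr (n (Suc l)) - (1 - (\<Sum>l'<Suc l. p l'))\<bar> \<le> \<eta>" using pa unfolding Pr_def by blast
    show ?thesis using a1 a2 unfolding Wl by (simp add: abs_le_iff)
  qed
  have W0: "0 \<le> W l" for l unfolding W_def using w0 by (simp add: sum_nonneg)
  have grp: "\<bar>(\<Sum>j\<in>{n l..<n (Suc l)}. w j * f (X j)) - W l * f (x l)\<bar> \<le> W l * \<delta>" if "l < L" for l
  proof -
    have "\<bar>(\<Sum>j\<in>{n l..<n (Suc l)}. w j * f (X j)) - W l * f (x l)\<bar>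
        = \<bar>\<Sum>j\<in>{n l..<n (Suc l)}. w j * (f (X j) - f (x l))\<bar>"
    proof -
      have "W l * f (x l) = (\<Sum>j\<in>{n l..<n (Suc l)}. w j * f (x l))"
        unfolding W_def by (rule sum_distrib_right)
      moreover have "(\<Sum>j\<in>{n l..<n (Suc l)}. w j * f (X j)) - (\<Sum>j\<in>{n l..<n (Suc l)}. w j * f (x l))
          = (\<Sum>j\<in>{n l..<n (Suc l)}. w j * (f (X j) - f (x l)))"
        by (simp add: sum_subtractf right_diff_distrib)
      ultimately show ?thesis by simp
    qed
    also have "\<dots> \<le> (\<Sum>j\<in>{n l..<n (Suc l)}. \<bar>w j * (f (X j) - f (x l))\<bar>)" by (rule sum_abs)
    also have "\<dots> \<le> (\<Sum>j\<in>{n l..<n (Suc l)}. w j * \<delta>)"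
      by (rule sum_mono) (use cl that w0 in \<open>auto simp: abs_mult intro: mult_left_mono\<close>)
    also have "\<dots> = W l * \<delta>" unfolding W_def by (simp add: sum_distrib_right)
    finally show ?thesis .
  qed
  have sumW: "(\<Sum>l<L. W l) = 1 - Pr N"
    using regroup[OF mn n0, of w L] part[of N] unfolding W_def N_def by simp
  have PrN0: "0 \<le> Pr N" unfolding Pr_def using S.prod_01 by simp
  have step2: "\<bar>(\<Sum>j<N. w j * f (X j)) - (\<Sum>l<L. W l * f (x l))\<bar> \<le> \<delta>"
  proof -
    have "(\<Sum>j<N. w j * f (X j)) = (\<Sum>l<L. \<Sum>j\<in>{n l..<n (Suc l)}. w j * f (X j))"
      unfolding N_def by (rule regroup[OF mn n0])
    then have "\<bar>(\<Sum>j<N. w j * f (X j)) - (\<Sum>l<L. W l * f (x l))\<bar>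
        = \<bar>\<Sum>l<L. ((\<Sum>j\<in>{n l..<n (Suc l)}. w j * f (X j)) - W l * f (x l))\<bar>"
      by (simp add: sum_subtractf)
    also have "\<dots> \<le> (\<Sum>l<L. \<bar>(\<Sum>j\<in>{n l..<n (Suc l)}. w j * f (X j)) - W l * f (x l)\<bar>)"
      by (rule sum_abs)
    also have "\<dots> \<le> (\<Sum>l<L. W l * \<delta>)" by (rule sum_mono) (use grp in auto)
    also have "\<dots> = (1 - Pr N) * \<delta>" using sumW sum_distrib_right[of W "{..<L}" \<delta>, symmetric] by simp
    also have "\<dots> \<le> \<delta>" using PrN0 \<delta> by (simp add: mult_le_cancel_right1 algebra_simps)
    finally show ?thesis .
  qed
  have step3: "\<bar>(\<Sum>l<L. W l * f (x l)) - (\<Sum>l<L. p l * f (x l))\<bar> \<le> 2 * \<eta> * B * real L"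
  proof -
    have "\<bar>(\<Sum>l<L. W l * f (x l)) - (\<Sum>l<L. p l * f (x l))\<bar> = \<bar>\<Sum>l<L. (W l - p l) * f (x l)\<bar>"
      by (simp add: sum_subtractf left_diff_distrib)
    also have "\<dots> \<le> (\<Sum>l<L. \<bar>(W l - p l) * f (x l)\<bar>)" by (rule sum_abs)
    also have "\<dots> \<le> (\<Sum>l<L. 2 * \<eta> * B)"
    proof (rule sum_mono)
      fix l assume "l \<in> {..<L}"
      then have "\<bar>W l - p l\<bar> \<le> 2 * \<eta>" using Wp by simp
      then show "\<bar>(W l - p l) * f (x l)\<bar> \<le> 2 * \<eta> * B"
        unfolding abs_mult using fB[of "x l"] by (intro mult_mono) auto
    qed
    also have "\<dots> = 2 * \<eta> * B * real L" by simp
    finally show ?thesis .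
  qed
  have "\<bar>(\<Sum>j. w j * f (X j)) + c * I0 - (\<Sum>l<L. p l * f (x l))\<bar> \<le> B * \<eta> + \<delta> + 2 * \<eta> * B * real L"
    using step1 step2 step3 by linarith
  then show ?thesis unfolding w_def c_def .
qed


lemma grp_props:
  fixes n :: "nat \<Rightarrow> nat"
  assumes mn: "mono n" and n0: "n 0 = 0" and j: "j < n L"
  shows "(LEAST l. j < n (Suc l)) < L \<and> n (LEAST l. j < n (Suc l)) \<le> j \<and> j < n (Suc (LEAST l. j < n (Suc l)))"
proof -
  define g where "g = (LEAST l. j < n (Suc l))"
  have L0: "L \<noteq> 0" using j n0 by (cases L) auto
  then have ex: "j < n (Suc (L - 1))" using j by simp
  have g1: "j < n (Suc g)" unfolding g_def by (rule LeastI[of "\<lambda>l. j < n (Suc l)", OF ex])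
  have g2: "g \<le> L - 1" unfolding g_def by (rule Least_le[of "\<lambda>l. j < n (Suc l)", OF ex])
  have g3: "n g \<le> j"
  proof (cases g)
    case 0 then show ?thesis using n0 by simp
  next
    case (Suc g')
    have "\<not> j < n (Suc g')" unfolding g_def by (rule not_less_Least) (use Suc g_def in simp)
    then show ?thesis using Suc by simp
  qed
  show ?thesis using g1 g2 g3 L0 unfolding g_def[symmetric] by simp
qed

lemma grp_unique:
  fixes n :: "nat \<Rightarrow> nat"
  assumes mn: "mono n" and j: "n l \<le> j" "j < n (Suc l)"
  shows "(LEAST l. j < n (Suc l)) = l"
proof (rule Least_equality)
  show "j < n (Suc l)" by (rule j(2))
  fix l' assume "j < n (Suc l')"
  show "l \<le> l'"
  proof (rule ccontr)
    assume "\<not> l \<le> l'"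
    then have "Suc l' \<le> l" by simp
    then have "n (Suc l') \<le> n l" using mn by (simp add: monoD)
    then show False using \<open>j < n (Suc l')\<close> j(1) by simp
  qed
qed

context esb
begin

lemma E2_pos:
  assumes sup: "{0<..<\<epsilon>0} \<subseteq> msupport (mean_measure M \<nu>)"
    and ab: "0 < a" "a < b" "b < \<epsilon>0"
  shows "0 < measure M {\<omega> \<in> space M. \<forall>i<N. v i \<omega> \<in> {a<..<b}}"
proof -
  define I where "I = {a<..<b}"
  have Ib: "I \<in> sets borel" unfolding I_def by simp
  have "(a + b) / 2 \<in> {0<..<\<epsilon>0}" using ab by auto
  then have "(a + b) / 2 \<in> msupport (mean_measure M \<nu>)" using sup by blast
  moreover have "open I" "(a + b) / 2 \<in> I" unfolding I_def using ab by auto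
  ultimately have "0 < emeasure (mean_measure M \<nu>) I" unfolding msupport_def by blast
  then have G: "0 < (\<integral>\<^sup>+\<omega>. emeasure (\<nu> \<omega>) I \<partial>M)"
    unfolding mean_measure_def emeasure_measure_of_conv by (auto split: if_splits)
  define g where "g \<omega> = measure (\<nu> \<omega>) I" for \<omega>
  have gm[measurable]: "g \<in> borel_measurable M" unfolding g_def using Ib by (rule nu_meas)
  have g01: "0 \<le> g \<omega> \<and> g \<omega> \<le> 1" if "\<omega> \<in> space M" for \<omega>
    using prob_space.prob_le_1[OF nu_prob[OF that]] unfolding g_def by simp
  have sig: "space M \<in> sigma_of_rm M \<nu>" unfolding sigma_of_rm_def by (rule sigma_sets_top)
  have "measure M (space M \<inter> {\<omega> \<in> space M. \<forall>i<N. v i \<omega> \<in> I}) =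
        (\<integral>\<omega>. indicator (space M) \<omega> * (\<Prod>i<N. measure (\<nu> \<omega>) I) \<partial>M)"
    by (rule directsD[OF _ sig]) (use Ib in simp)
  also have "\<dots> = (\<integral>\<omega>. g \<omega> ^ N \<partial>M)"
    by (rule Bochner_Integration.integral_cong) (auto simp: g_def)
  finally have eq: "measure M {\<omega> \<in> space M. \<forall>i<N. v i \<omega> \<in> I} = (\<integral>\<omega>. g \<omega> ^ N \<partial>M)"
    by (simp add: Int_absorb1)
  have int: "integrable M (\<lambda>\<omega>. g \<omega> ^ N)"
    by (rule P.integrable_const_bound[of _ 1]) (use g01 in \<open>auto intro: power_le_one\<close>)
  show ?thesis
  proof (rule ccontr)
    assume "\<not> ?thesis"
    then have "measure M {\<omega> \<in> space M. \<forall>i<N. v i \<omega> \<in> I} = 0"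
      using measure_nonneg[of M] unfolding I_def by (meson not_less order.antisym)
    then have "(\<integral>\<omega>. g \<omega> ^ N \<partial>M) = 0" using eq by simp
    then have "AE \<omega> in M. g \<omega> ^ N = 0"
      using integral_nonneg_eq_0_iff_AE[OF int] g01 by (auto intro!: AE_I2)
    then have "AE \<omega> in M. emeasure (\<nu> \<omega>) I = 0"
    proof (rule AE_mp[OF _ AE_I2[OF impI]])
      fix \<omega> assume \<omega>: "\<omega> \<in> space M" and "g \<omega> ^ N = 0"
      then have "g \<omega> = 0" by simp
      interpret N: prob_space "\<nu> \<omega>" by (rule nu_prob[OF \<omega>])
      show "emeasure (\<nu> \<omega>) I = 0"
        using N.emeasure_eq_measure \<open>g \<omega> = 0\<close> unfolding g_def by simp
    qed
    then have "(\<integral>\<^sup>+\<omega>. emeasure (\<nu> \<omega>) I \<partial>M) = 0"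
      by (simp add: nn_integral_cong_AE)
    then show False using G by simp
  qed
qed


lemma E1_pos:
  assumes Vb: "\<And>j. V j \<in> sets borel" and Vp: "\<And>j. 0 < emeasure \<mu>0 (V j)"
  shows "0 < measure M {\<omega> \<in> space M. \<forall>j<N. \<xi> j \<omega> \<in> V j}"
proof (cases "N = 0")
  case True
  then show ?thesis using P.prob_space by simp
next
  case False
  interpret P0: prob_space \<mu>0 by (rule mu0_prob)
  have eq: "{\<omega> \<in> space M. \<forall>j<N. \<xi> j \<omega> \<in> V j} = (\<Inter>j\<in>{..<N}. \<xi> j -` V j \<inter> space M)"
    using False by auto
  have "measure M (\<Inter>j\<in>{..<N}. \<xi> j -` V j \<inter> space M) = (\<Prod>j\<in>{..<N}. measure M (\<xi> j -` V j \<inter> space M))"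
    by (rule P.indep_varsD[OF xi_indep]) (use False Vb in auto)
  also have "\<dots> > 0"
  proof (rule prod_pos)
    fix j assume "j \<in> {..<N}"
    have "measure M (\<xi> j -` V j \<inter> space M) = measure (distr M borel (\<xi> j)) (V j)"
      using Vb by (simp add: measure_distr)
    also have "\<dots> = measure \<mu>0 (V j)" using xi_law by simp
    also have "\<dots> > 0" using Vp[of j] by (simp add: P0.emeasure_eq_measure)
    finally show "0 < measure M (\<xi> j -` V j \<inter> space M)" .
  qed
  finally show ?thesis using eq by simp
qed

lemma indep_E:
  assumes Vb[measurable]: "\<And>j. V j \<in> sets borel" and Ib[measurable]: "I \<in> sets borel"
  shows "emeasure M ({\<omega> \<in> space M. \<forall>j<N. \<xi> j \<omega> \<in> V j} \<inter> {\<omega> \<in> space M. \<forall>i<N. v i \<omega> \<in> I}) =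
         emeasure M {\<omega> \<in> space M. \<forall>j<N. \<xi> j \<omega> \<in> V j} * emeasure M {\<omega> \<in> space M. \<forall>i<N. v i \<omega> \<in> I}"
proof -
  define SA where "SA = {x \<in> space (PiM UNIV (\<lambda>_::nat. borel::'a measure)). \<forall>j<N. x j \<in> V j}"
  define SB where "SB = {x \<in> space (PiM UNIV (\<lambda>_::nat. borel::real measure)). \<forall>i<N. x i \<in> I}"
  have SA[measurable]: "SA \<in> sets (PiM UNIV (\<lambda>_::nat. borel::'a measure))" unfolding SA_def by measurable
  have SB[measurable]: "SB \<in> sets (PiM UNIV (\<lambda>_::nat. borel::real measure))" unfolding SB_def by measurable
  have m1[measurable]: "(\<lambda>\<omega> i. \<xi> i \<omega>) \<in> measurable M (PiM UNIV (\<lambda>_. borel))"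
    by (rule measurable_PiM_single') auto
  have m2[measurable]: "(\<lambda>\<omega> i. v i \<omega>) \<in> measurable M (PiM UNIV (\<lambda>_. borel))"
    by (rule measurable_PiM_single') auto
  have mP: "(\<lambda>\<omega>. (\<lambda>i. \<xi> i \<omega>, \<lambda>i. v i \<omega>)) \<in> measurable M (PiM UNIV (\<lambda>_. borel) \<Otimes>\<^sub>M PiM UNIV (\<lambda>_. borel))"
    by measurable
  have pre: "(\<lambda>\<omega>. (\<lambda>i. \<xi> i \<omega>, \<lambda>i. v i \<omega>)) -` (SA \<times> SB) \<inter> space M =
      {\<omega> \<in> space M. \<forall>j<N. \<xi> j \<omega> \<in> V j} \<inter> {\<omega> \<in> space M. \<forall>i<N. v i \<omega> \<in> I}"
    unfolding SA_def SB_def by (auto simp: space_PiM)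
  have preA: "(\<lambda>\<omega> i. \<xi> i \<omega>) -` SA \<inter> space M = {\<omega> \<in> space M. \<forall>j<N. \<xi> j \<omega> \<in> V j}"
    unfolding SA_def by (auto simp: space_PiM)
  have preB: "(\<lambda>\<omega> i. v i \<omega>) -` SB \<inter> space M = {\<omega> \<in> space M. \<forall>i<N. v i \<omega> \<in> I}"
    unfolding SB_def by (auto simp: space_PiM)
  interpret D2: prob_space "distr M (PiM UNIV (\<lambda>_. borel)) (\<lambda>\<omega> i. v i \<omega>)"
    by (rule P.prob_space_distr[OF m2])
  have "emeasure M ({\<omega> \<in> space M. \<forall>j<N. \<xi> j \<omega> \<in> V j} \<inter> {\<omega> \<in> space M. \<forall>i<N. v i \<omega> \<in> I})
      = emeasure (distr M (PiM UNIV (\<lambda>_. borel) \<Otimes>\<^sub>M PiM UNIV (\<lambda>_. borel)) (\<lambda>\<omega>. (\<lambda>i. \<xi> i \<omega>, \<lambda>i. v i \<omega>))) (SA \<times> SB)"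
    using pre mP by (simp add: emeasure_distr)
  also have "\<dots> = emeasure (distr M (PiM UNIV (\<lambda>_. borel)) (\<lambda>\<omega> i. \<xi> i \<omega>)
                       \<Otimes>\<^sub>M distr M (PiM UNIV (\<lambda>_. borel)) (\<lambda>\<omega> i. v i \<omega>)) (SA \<times> SB)"
    using xi_v_indep by simp
  also have "\<dots> = emeasure (distr M (PiM UNIV (\<lambda>_. borel)) (\<lambda>\<omega> i. \<xi> i \<omega>)) SA *
                   emeasure (distr M (PiM UNIV (\<lambda>_. borel)) (\<lambda>\<omega> i. v i \<omega>)) SB"
    by (rule D2.emeasure_pair_measure_Times) simp_all
  also have "\<dots> = emeasure M {\<omega> \<in> space M. \<forall>j<N. \<xi> j \<omega> \<in> V j} * emeasure M {\<omega> \<in> space M. \<forall>i<N. v i \<omega> \<in> I}"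
    using preA preB by (simp add: emeasure_distr)
  finally show ?thesis .
qed

end


context esb
begin

lemma part1_sup:
  assumes sup: "{0<..<\<epsilon>0} \<subseteq> msupport (mean_measure M \<nu>)" and \<epsilon>0: "0 < \<epsilon>0"
  shows "{P \<in> borel_probs. msupport P \<subseteq> msupport \<mu>0} \<subseteq> law_support M mu"
proof
  fix P assume "P \<in> {P \<in> borel_probs. msupport P \<subseteq> msupport \<mu>0}"
  then have Pb: "P \<in> borel_probs" and Psup: "msupport P \<subseteq> msupport \<mu>0" by auto
  interpret P0: prob_space \<mu>0 by (rule mu0_prob)
  have sp0: "space \<mu>0 = UNIV" using sets_eq_imp_space_eq[OF mu0_sets] by simp
  have "\<forall>fs \<epsilon>. (\<forall>f\<in>set fs. bounded_continuous f) \<longrightarrow> \<epsilon> > 0 \<longrightarrow>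
          measure M {\<omega> \<in> space M. mu \<omega> \<in> weak_nbhd P fs \<epsilon>} > 0"
  proof (intro allI impI)
    fix fs :: "('a \<Rightarrow> real) list" and \<epsilon> :: real
    assume fs: "\<forall>f\<in>set fs. bounded_continuous f" and \<epsilon>: "0 < \<epsilon>"
    obtain B where B: "B \<ge> 1" "\<forall>f\<in>set fs. \<forall>y. \<bar>f y\<bar> \<le> B" using common_bound[OF fs] by blast
    define \<delta> where "\<delta> = \<epsilon> / 4"
    have \<delta>: "0 < \<delta>" using \<epsilon> by (simp add: \<delta>_def)
    obtain L :: nat and x :: "nat \<Rightarrow> 'a" and p :: "nat \<Rightarrow> real" where xs: "\<forall>l<L. x l \<in> msupport P" and p0: "\<forall>l<L. 0 \<le> p l" and ps: "(\<Sum>l<L. p l) = 1"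
        and disc: "\<forall>f\<in>set fs. \<bar>(\<integral>y. f y \<partial>P) - (\<Sum>l<L. p l * f (x l))\<bar> \<le> \<delta>"
      using discretize[OF Pb fs \<delta>] by blast
    define \<eta> where "\<eta> = \<epsilon> / (4 * B * (2 * real L + 1))"
    have \<eta>: "0 < \<eta>" using \<epsilon> B by (simp add: \<eta>_def)
    define K where "K = 4 * B * (2 * real L + 1)"
    have Kpos: "0 < K" unfolding K_def using B by (intro mult_pos_pos) auto
    have B\<eta>: "B * \<eta> + 2 * \<eta> * B * real L = \<epsilon> / 4"
    proof -
      have "B * \<eta> + 2 * \<eta> * B * real L = (\<eta> * K) / 4" unfolding K_def by (simp add: algebra_simps)
      moreover have "\<eta> * K = \<epsilon>" unfolding \<eta>_def K_def[symmetric] using Kpos by simp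
      ultimately show ?thesis by simp
    qed
    obtain a b :: real and n :: "nat \<Rightarrow> nat" where ab: "0 < a" "a < b" "b < \<epsilon>0" "b < 1" and n0: "n 0 = 0" and mn: "mono n"
       and pa: "\<forall>u. (\<forall>i<n L. a < u i \<and> u i < b) \<longrightarrow>
           (\<forall>l\<le>L. \<bar>(\<Prod>i<n l. 1 - u i) - (1 - (\<Sum>l'<l. p l'))\<bar> \<le> \<eta>)"
      using weights_choice[OF p0 ps \<eta> \<epsilon>0] by blast
    define N where "N = n L"
    define U where "U l = (\<Inter>f\<in>set fs. {y. \<bar>f y - f (x l)\<bar> < \<delta>})" for l
    have Uopen: "open (U l)" for l
      unfolding U_def
    proof (rule open_INT)
      show "finite (set fs)" by simp
      show "\<forall>f\<in>set fs. open {y. \<bar>f y - f (x l)\<bar> < \<delta>}"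
      proof
        fix f assume "f \<in> set fs"
        then have "continuous_on UNIV f" using fs by (simp add: bounded_continuous_def)
        then have "continuous_on UNIV (\<lambda>y. \<bar>f y - f (x l)\<bar>)" by (intro continuous_intros)
        then show "open {y. \<bar>f y - f (x l)\<bar> < \<delta>}"
          by (rule open_Collect_less) (rule continuous_on_const)
      qed
    qed
    have Upos: "0 < emeasure \<mu>0 (U l)" if "l < L" for l
    proof -
      have "x l \<in> msupport \<mu>0" using xs Psup that by blast
      moreover have "x l \<in> U l" unfolding U_def using \<delta> by simp
      ultimately show ?thesis using Uopen unfolding msupport_def by blast
    qed
    define grp where "grp j = (LEAST l. j < n (Suc l))" for j
    define V where "V j = (if j < N then U (grp j) else UNIV)" for j
    have Vb: "V j \<in> sets borel" for j unfolding V_def using Uopen by auto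
    have Vp: "0 < emeasure \<mu>0 (V j)" for j
    proof (cases "j < N")
      case True
      then have "grp j < L" using grp_props[OF mn n0, of j L] unfolding grp_def N_def by blast
      then show ?thesis using True Upos unfolding V_def by simp
    next
      case False
      then show ?thesis unfolding V_def using P0.emeasure_space_1 sp0 by simp
    qed
    define E1 where "E1 = {\<omega> \<in> space M. \<forall>j<N. \<xi> j \<omega> \<in> V j}"
    define E2 where "E2 = {\<omega> \<in> space M. \<forall>i<N. v i \<omega> \<in> {a<..<b}}"
    have E1p: "0 < measure M E1" unfolding E1_def by (rule E1_pos[OF Vb Vp])
    have E2p: "0 < measure M E2" unfolding E2_def by (rule E2_pos[OF sup ab(1-3)])
    have "emeasure M (E1 \<inter> E2) = emeasure M E1 * emeasure M E2"
      unfolding E1_def E2_def by (rule indep_E[OF Vb]) simp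
    then have "measure M (E1 \<inter> E2) = measure M E1 * measure M E2"
      by (simp add: P.emeasure_eq_measure ennreal_mult[symmetric])
    then have pos: "0 < measure M (E1 \<inter> E2)" using E1p E2p by simp
    have sub: "E1 \<inter> E2 \<subseteq> {\<omega> \<in> space M. \<forall>f\<in>set fs. \<bar>Rf f \<omega> - (\<integral>y. f y \<partial>P)\<bar> < \<epsilon>}"
    proof
      fix \<omega> assume \<omega>E: "\<omega> \<in> E1 \<inter> E2"
      then have \<omega>: "\<omega> \<in> space M" and hv: "\<forall>i<N. a < v i \<omega> \<and> v i \<omega> < b"
        and hx: "\<forall>j<N. \<xi> j \<omega> \<in> V j"
        unfolding E1_def E2_def by auto
      have pa': "\<forall>l\<le>L. \<bar>(\<Prod>i<n l. 1 - v i \<omega>) - (1 - (\<Sum>l'<l. p l'))\<bar> \<le> \<eta>"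
        using pa[rule_format, of "\<lambda>i. v i \<omega>"] hv unfolding N_def by blast
      have u01: "0 \<le> v i \<omega> \<and> v i \<omega> \<le> 1" for i using v_01[OF \<omega>, of i] by simp
      have "\<forall>f\<in>set fs. \<bar>Rf f \<omega> - (\<integral>y. f y \<partial>P)\<bar> < \<epsilon>"
      proof
        fix f assume f: "f \<in> set fs"
        have fB: "\<And>y. \<bar>f y\<bar> \<le> B" using B f by blast
        have "f \<in> borel_measurable borel" using fs f by (intro bc_meas) blast
        then have fm0: "f \<in> borel_measurable \<mu>0"
          by (simp add: measurable_cong_sets[OF mu0_sets refl])
        have fint0: "integrable \<mu>0 f" by (rule P0.integrable_const_bound[of _ B]) (use fB fm0 in auto)
        have I0: "\<bar>\<integral>y. f y \<partial>\<mu>0\<bar> \<le> B"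
        proof -
          have "\<bar>\<integral>y. f y \<partial>\<mu>0\<bar> \<le> (\<integral>y. \<bar>f y\<bar> \<partial>\<mu>0)"
            using integral_norm_bound[of \<mu>0 f] by simp
          also have "\<dots> \<le> (\<integral>y. B \<partial>\<mu>0)"
            using fint0 fB by (intro integral_mono) auto
          also have "\<dots> = B" using P0.prob_space by simp
          finally show ?thesis .
        qed
        have cl: "\<forall>l<L. \<forall>j\<in>{n l..<n (Suc l)}. \<bar>f (\<xi> j \<omega>) - f (x l)\<bar> \<le> \<delta>"
        proof (intro allI impI ballI)
          fix l j assume l: "l < L" and j: "j \<in> {n l..<n (Suc l)}"
          have "n (Suc l) \<le> n L" using mn l by (simp add: monoD)
          then have jN: "j < N" using j unfolding N_def by simp
          have "grp j = l" unfolding grp_def by (rule grp_unique[OF mn]) (use j in auto)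
          then have "\<xi> j \<omega> \<in> U l" using hx jN unfolding V_def by auto
          then show "\<bar>f (\<xi> j \<omega>) - f (x l)\<bar> \<le> \<delta>" using f unfolding U_def by auto
        qed
        have core: "\<bar>(\<Sum>j. sbw (\<lambda>i. v i \<omega>) j * f (\<xi> j \<omega>)) + (1 - (\<Sum>j. sbw (\<lambda>i. v i \<omega>) j)) * (\<integral>y. f y \<partial>\<mu>0)
              - (\<Sum>l<L. p l * f (x l))\<bar> \<le> B * \<eta> + \<delta> + 2 * \<eta> * B * real L"
          by (rule core_estimate[OF u01 n0 mn pa' ps fB I0 cl less_imp_le[OF \<delta>]])
        have "Rf f \<omega> = (\<Sum>j. sbw (\<lambda>i. v i \<omega>) j * f (\<xi> j \<omega>)) + (1 - (\<Sum>j. sbw (\<lambda>i. v i \<omega>) j)) * (\<integral>y. f y \<partial>\<mu>0)"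
          unfolding Rf_def by (simp add: sb_weight_sbw)
        then have "\<bar>Rf f \<omega> - (\<Sum>l<L. p l * f (x l))\<bar> \<le> \<epsilon> / 4 + \<delta>" using core B\<eta> by simp
        moreover have "\<bar>(\<integral>y. f y \<partial>P) - (\<Sum>l<L. p l * f (x l))\<bar> \<le> \<delta>" using disc f by blast
        ultimately show "\<bar>Rf f \<omega> - (\<integral>y. f y \<partial>P)\<bar> < \<epsilon>" unfolding \<delta>_def using \<epsilon> by linarith
      qed
      then show "\<omega> \<in> {\<omega> \<in> space M. \<forall>f\<in>set fs. \<bar>Rf f \<omega> - (\<integral>y. f y \<partial>P)\<bar> < \<epsilon>}" using \<omega> by simp
    qed
    have Ts: "{\<omega> \<in> space M. \<forall>f\<in>set fs. \<bar>Rf f \<omega> - (\<integral>y. f y \<partial>P)\<bar> < \<epsilon>} \<in> sets M"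
      by (rule T_sets[OF fs])
    have "measure M (E1 \<inter> E2) \<le> measure M {\<omega> \<in> space M. \<forall>f\<in>set fs. \<bar>Rf f \<omega> - (\<integral>y. f y \<partial>P)\<bar> < \<epsilon>}"
      by (rule P.finite_measure_mono[OF sub Ts])
    then show "measure M {\<omega> \<in> space M. mu \<omega> \<in> weak_nbhd P fs \<epsilon>} > 0"
      using pos T_eq[OF fs, of P \<epsilon>] by simp
  qed
  then show "P \<in> law_support M mu" using Pb unfolding law_support_def by blast
qed

end

theorem theorem1:
  fixes M :: "'b measure"
    and \<mu>0 :: "'a::polish_space measure"
    and v :: "nat \<Rightarrow> 'b \<Rightarrow> real"
    and \<xi> :: "nat \<Rightarrow> 'b \<Rightarrow> 'a"
    and \<nu> :: "'b \<Rightarrow> real measure"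
  assumes M: "prob_space M"
    and mu0_prob: "prob_space \<mu>0" and mu0_sets: "sets \<mu>0 = sets borel"
    and mu0_diffuse: "\<And>x. emeasure \<mu>0 {x} = 0"
    and v_rv: "\<And>i. v i \<in> borel_measurable M"
    and v_01: "\<And>i \<omega>. \<omega> \<in> space M \<Longrightarrow> v i \<omega> \<in> {0..1}"
    and v_exch: "exchangeable M v"
    and nu_rpm: "random_prob_01 M \<nu>"
    and nu_directs: "directs M \<nu> v"
    and xi_indep: "prob_space.indep_vars M (\<lambda>_. borel) \<xi> UNIV"
    and xi_law: "\<And>i. distr M borel (\<xi> i) = \<mu>0"
    and xi_v_indep: "distr M (PiM UNIV (\<lambda>_. borel) \<Otimes>\<^sub>M PiM UNIV (\<lambda>_. borel))
                       (\<lambda>\<omega>. (\<lambda>i. \<xi> i \<omega>, \<lambda>i. v i \<omega>))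
                     = distr M (PiM UNIV (\<lambda>_. borel)) (\<lambda>\<omega> i. \<xi> i \<omega>)
                       \<Otimes>\<^sub>M distr M (PiM UNIV (\<lambda>_. borel)) (\<lambda>\<omega> i. v i \<omega>)"
  shows "((\<exists>\<epsilon>>0. {0<..<\<epsilon>} \<subseteq> msupport (mean_measure M \<nu>))
            \<longrightarrow> full_support M (ssp_measure (sb_weight v) \<xi> \<mu>0) \<mu>0)
       \<and> ((AE \<omega> in M. (\<Sum>j. sb_weight v j \<omega>) = 1) \<longleftrightarrow> (AE \<omega> in M. measure (\<nu> \<omega>) {0} < 1))"
proof -
  have E: "esb M \<mu>0 v \<xi> \<nu>"
    by (rule esb.intro[OF M mu0_prob mu0_sets v_rv v_01 nu_rpm nu_directs xi_indep xi_law xi_v_indep])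
  have i: "full_support M (ssp_measure (sb_weight v) \<xi> \<mu>0) \<mu>0"
    if H: "\<exists>\<epsilon>>0. {0<..<\<epsilon>} \<subseteq> msupport (mean_measure M \<nu>)"
  proof -
    obtain \<epsilon> where \<epsilon>: "0 < \<epsilon>" "{0<..<\<epsilon>} \<subseteq> msupport (mean_measure M \<nu>)" using H by blast
    show ?thesis
      unfolding full_support_def
      using esb.part1_sub[OF E] esb.part1_sup[OF E \<epsilon>(2) \<epsilon>(1)] by (rule subset_antisym)
  qed
  have ii: "(AE \<omega> in M. (\<Sum>j. sb_weight v j \<omega>) = 1) \<longleftrightarrow> (AE \<omega> in M. measure (\<nu> \<omega>) {0} < 1)"
    using esb.part2_fwd[OF E] esb.part2_bwd[OF E] by blast
  show ?thesis using i ii by blast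
qed


end
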